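(* For every $\alpha>1$, with $\lambda=\alpha(\alpha-1)/2$, \[ \mathbb E\bigl[e^{-\lambda L^{main}}\,\big|\,\mathbf{COND}\bigr]=n^{-(\alpha-1)/2+o(1)}\qquad(n\to\infty). \]
   Context: For $n$ large let $A=\lfloor\ln^{10}n\rfloor$. Let $\xi_1,\dots,\xi_{2n-2}$ be i.i.d. uniform on $\{-1,+1\}$, $S_t=\sum_{i=1}^t\xi_i$ ($S_0=0$). $\mathbf{COND}$ is the event $\{S_{2A-2}=0\}\cap\{S_{2n-2}=0\}$, and $L^{main}=\sum_{i=2A-1}^{2n-2}S_i^2/i^2$. *)

theory Defs
  imports "HOL-Probability.Probability"
begin

definition Apar :: "nat \<Rightarrow> nat" where
  "Apar n = nat \<lfloor>(ln (real n)) ^ 10\<rfloor>"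

definition walks :: "nat \<Rightarrow> (nat \<Rightarrow> int) set" where
  "walks n = PiE {1..2*n-2} (\<lambda>_. {-1, 1})"

definition walk_pmf :: "nat \<Rightarrow> (nat \<Rightarrow> int) pmf" where
  "walk_pmf n = pmf_of_set (walks n)"

definition S :: "(nat \<Rightarrow> int) \<Rightarrow> nat \<Rightarrow> int" where
  "S xi t = (\<Sum>i\<in>{1..t}. xi i)"

definition COND :: "nat \<Rightarrow> (nat \<Rightarrow> int) set" where
  "COND n = {xi. S xi (2 * Apar n - 2) = 0 \<and> S xi (2*n-2) = 0}"

definition Lmain :: "nat \<Rightarrow> (nat \<Rightarrow> int) \<Rightarrow> real" where
  "Lmain n xi = (\<Sum>i\<in>{2 * Apar n - 1..2*n-2}. (real_of_int (S xi i))^2 / (real i)^2)"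

definition condE :: "real \<Rightarrow> nat \<Rightarrow> real" where
  "condE lam n = measure_pmf.expectation (cond_pmf (walk_pmf n) (COND n))
                    (\<lambda>xi. exp (- lam * Lmain n xi))"

end

theory Submission
  imports Defs "HOL-Real_Asymp.Real_Asymp"
begin

definition Kst :: "(nat \<Rightarrow> int \<Rightarrow> real) \<Rightarrow> nat \<Rightarrow> (int \<Rightarrow> real) \<Rightarrow> int \<Rightarrow> real" where
  "Kst w s g x = (w (Suc s) (x+1) * g (x+1) + w (Suc s) (x-1) * g (x-1)) / 2"

fun Kp :: "(nat \<Rightarrow> int \<Rightarrow> real) \<Rightarrow> (int \<Rightarrow> real) \<Rightarrow> nat \<Rightarrow> nat \<Rightarrow> int \<Rightarrow> real" where
  "Kp w G s 0 = G"
| "Kp w G s (Suc k) = Kst w s (Kp w G (Suc s) k)"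

lemma Kp_add: "Kp w G s (k1 + k2) = Kp w (Kp w G (s + k1) k2) s k1"
  by (induction k1 arbitrary: s) auto

lemma Kst_mono:
  assumes "\<And>i y. w i y \<ge> 0" "\<And>y. g y \<le> g' y"
  shows "Kst w s g x \<le> Kst w s g' x"
  unfolding Kst_def using assms
  by (intro divide_right_mono add_mono mult_left_mono) auto

lemma Kp_sub:
  assumes w: "\<And>i y. w i y \<ge> 0"
    and step: "\<And>j x. j < k \<Longrightarrow> f (s+j) x \<le> Kst w (s+j) (f (s+j+1)) x"
    and ter: "\<And>x. f (s+k) x \<le> G x"
  shows "f s x \<le> Kp w G s k x"
  using step ter
proof (induction k arbitrary: s x)
  case 0
  then show ?case by simp
next
  case (Suc k)
  have IH: "f (Suc s) y \<le> Kp w G (Suc s) k y" for y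
    using Suc.IH[of "Suc s" y] Suc.prems
    by (metis add_Suc add_Suc_shift Suc_less_eq)
  have "f s x \<le> Kst w s (f (s+1)) x" using Suc.prems(1)[of 0 x] by simp
  also have "\<dots> \<le> Kst w s (Kp w G (Suc s) k) x"
    using IH by (intro Kst_mono w) auto
  finally show ?case by simp
qed

lemma Kp_super:
  assumes w: "\<And>i y. w i y \<ge> 0"
    and step: "\<And>j x. j < k \<Longrightarrow> Kst w (s+j) (f (s+j+1)) x \<le> f (s+j) x"
    and ter: "\<And>x. G x \<le> f (s+k) x"
  shows "Kp w G s k x \<le> f s x"
  using step ter
proof (induction k arbitrary: s x)
  case 0
  then show ?case by simp
next
  case (Suc k)
  have IH: "Kp w G (Suc s) k y \<le> f (Suc s) y" for y
    using Suc.IH[of "Suc s" y] Suc.prems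
    by (metis add_Suc add_Suc_shift Suc_less_eq)
  have "Kp w G s (Suc k) x = Kst w s (Kp w G (Suc s) k) x" by simp
  also have "\<dots> \<le> Kst w s (f (s+1)) x"
    using IH by (intro Kst_mono w) auto
  also have "\<dots> \<le> f s x" using Suc.prems(1)[of 0 x] by simp
  finally show ?case .
qed

lemma Kp_nonneg:
  assumes "\<And>i y. w i y \<ge> 0" "\<And>y. G y \<ge> 0"
  shows "Kp w G s k x \<ge> 0"
  by (rule Kp_sub[where f="\<lambda>_ _. 0"]) (use assms in \<open>auto simp: Kst_def\<close>)

lemma Kp_linear: "Kp w (\<lambda>y. c * G y) s k x = c * Kp w G s k x"
  by (induction k arbitrary: s x) (auto simp: Kst_def algebra_simps)

lemma Kp_cong_w:
  assumes "\<And>i y. s < i \<Longrightarrow> i \<le> s + k \<Longrightarrow> w i y = w' i y"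
  shows "Kp w G s k x = Kp w' G s k x"
  using assms
proof (induction k arbitrary: s x)
  case 0 then show ?case by simp
next
  case (Suc k)
  have "Kp w G (Suc s) k y = Kp w' G (Suc s) k y" for y
    using Suc.IH[of "Suc s" y] Suc.prems by auto
  moreover have "w (Suc s) y = w' (Suc s) y" for y using Suc.prems by auto
  ultimately show ?case by (simp add: Kst_def)
qed

section \<open>Path sums\<close>

lemma sum_PiE_insert:
  fixes F :: "(nat \<Rightarrow> int) \<Rightarrow> real"
  assumes "a \<notin> I" "finite I"
  shows "(\<Sum>\<eta>\<in>PiE (insert a I) (\<lambda>_. Y). F \<eta>) = (\<Sum>y\<in>Y. \<Sum>g\<in>PiE I (\<lambda>_. Y). F (g(a := y)))"
proof -
  have inj: "inj_on (\<lambda>(y, g). g(a := y)) (Y \<times> PiE I (\<lambda>_. Y))"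
  proof (rule inj_onI, clarify)
    fix y g y' g'
    assume h: "y \<in> Y" "g \<in> PiE I (\<lambda>_. Y)" "y' \<in> Y" "g' \<in> PiE I (\<lambda>_. Y)" "g(a := y) = g'(a := y')"
    have "y = y'" using fun_cong[OF h(5), of a] by simp
    moreover have "g = g'"
    proof
      fix z show "g z = g' z"
      proof (cases "z = a")
        case True
        have "g a = undefined" "g' a = undefined" using h(2,4) assms(1) by (auto intro: PiE_arb)
        then show ?thesis using True by simp
      next
        case False then show ?thesis using fun_cong[OF h(5), of z] by simp
      qed
    qed
    ultimately show "y = y' \<and> g = g'" by simp
  qed
  have "(\<Sum>\<eta>\<in>PiE (insert a I) (\<lambda>_. Y). F \<eta>) = (\<Sum>\<eta>\<in>(\<lambda>(y, g). g(a := y)) ` (Y \<times> PiE I (\<lambda>_. Y)). F \<eta>)"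
    by (simp only: PiE_insert_eq)
  also have "\<dots> = (\<Sum>p\<in>Y \<times> PiE I (\<lambda>_. Y). F ((\<lambda>(y, g). g(a := y)) p))"
    by (rule sum.reindex[OF inj, unfolded comp_def])
  also have "\<dots> = (\<Sum>y\<in>Y. \<Sum>g\<in>PiE I (\<lambda>_. Y). F (g(a := y)))"
    by (simp add: sum.cartesian_product split_def)
  finally show ?thesis .
qed

lemma path_sum:
  "(\<Sum>\<eta>\<in>PiE {s<..s+k} (\<lambda>_. {-1::int,1}).
      G (x + (\<Sum>j\<in>{s<..s+k}. \<eta> j)) * (\<Prod>i\<in>{s<..s+k}. w i (x + (\<Sum>j\<in>{s<..i}. \<eta> j))))
   = 2^k * Kp w G s k x"
proof (induction k arbitrary: s x)
  case 0
  then show ?case by simp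
next
  case (Suc k)
  have I: "{s<..s + Suc k} = insert (Suc s) {Suc s<..Suc s + k}" by auto
  have nI: "Suc s \<notin> {Suc s<..Suc s + k}" by simp
  have A: "(\<Sum>j\<in>{s<..i}. (g(Suc s := y)) j) = y + (\<Sum>j\<in>{Suc s<..i}. g j)" if "Suc s \<le> i"
    for i and g :: "nat \<Rightarrow> int" and y
  proof -
    have e: "{s<..i} = insert (Suc s) {Suc s<..i}" using that by auto
    have "(\<Sum>j\<in>{Suc s<..i}. (g(Suc s := y)) j) = (\<Sum>j\<in>{Suc s<..i}. g j)"
      by (intro sum.cong) auto
    then show ?thesis unfolding e by (subst sum.insert) auto
  qed
  have key: "G (x + (\<Sum>j\<in>{s<..s+Suc k}. (g(Suc s := y)) j)) *
          (\<Prod>i\<in>{s<..s+Suc k}. w i (x + (\<Sum>j\<in>{s<..i}. (g(Suc s := y)) j)))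
        = w (Suc s) (x + y) * (G ((x+y) + (\<Sum>j\<in>{Suc s<..Suc s+k}. g j)) *
          (\<Prod>i\<in>{Suc s<..Suc s+k}. w i ((x+y) + (\<Sum>j\<in>{Suc s<..i}. g j))))"
    for g y
  proof -
    have B: "(\<Prod>i\<in>{Suc s<..Suc s+k}. w i (x + (\<Sum>j\<in>{s<..i}. (g(Suc s := y)) j)))
         = (\<Prod>i\<in>{Suc s<..Suc s+k}. w i ((x+y) + (\<Sum>j\<in>{Suc s<..i}. g j)))"
    proof (intro prod.cong refl)
      fix i assume "i \<in> {Suc s<..Suc s+k}"
      then have "Suc s \<le> i" by simp
      show "w i (x + (\<Sum>j\<in>{s<..i}. (g(Suc s := y)) j)) = w i ((x+y) + (\<Sum>j\<in>{Suc s<..i}. g j))"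
        by (simp only: A[OF \<open>Suc s \<le> i\<close>] add.assoc)
    qed
    have C: "(\<Prod>i\<in>{s<..s+Suc k}. w i (x + (\<Sum>j\<in>{s<..i}. (g(Suc s := y)) j)))
       = w (Suc s) (x + y) * (\<Prod>i\<in>{Suc s<..Suc s+k}. w i (x + (\<Sum>j\<in>{s<..i}. (g(Suc s := y)) j)))"
      unfolding I by (subst prod.insert) (auto simp: A)
    have D: "(\<Sum>j\<in>{s<..s+Suc k}. (g(Suc s := y)) j) = y + (\<Sum>j\<in>{Suc s<..Suc s+k}. g j)"
      using A[of "s + Suc k" g y] by simp
    show ?thesis unfolding C B D by (simp add: add.assoc)
  qed
  have "(\<Sum>\<eta>\<in>PiE {s<..s+Suc k} (\<lambda>_. {-1::int,1}).
      G (x + (\<Sum>j\<in>{s<..s+Suc k}. \<eta> j)) * (\<Prod>i\<in>{s<..s+Suc k}. w i (x + (\<Sum>j\<in>{s<..i}. \<eta> j))))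
      = (\<Sum>y\<in>{-1::int,1}. \<Sum>g\<in>PiE {Suc s<..Suc s+k} (\<lambda>_. {-1::int,1}).
          G (x + (\<Sum>j\<in>{s<..s+Suc k}. (g(Suc s := y)) j)) *
          (\<Prod>i\<in>{s<..s+Suc k}. w i (x + (\<Sum>j\<in>{s<..i}. (g(Suc s := y)) j))))"
    unfolding I by (rule sum_PiE_insert[OF nI]) simp
  also have "\<dots> = (\<Sum>y\<in>{-1::int,1}. \<Sum>g\<in>PiE {Suc s<..Suc s+k} (\<lambda>_. {-1::int,1}).
          w (Suc s) (x + y) * (G ((x+y) + (\<Sum>j\<in>{Suc s<..Suc s+k}. g j)) *
          (\<Prod>i\<in>{Suc s<..Suc s+k}. w i ((x+y) + (\<Sum>j\<in>{Suc s<..i}. g j)))))"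
    by (simp only: key)
  also have "\<dots> = (\<Sum>y\<in>{-1::int,1}. w (Suc s) (x + y) * (2^k * Kp w G (Suc s) k (x+y)))"
    by (simp only: sum_distrib_left[symmetric] Suc.IH)
  also have "\<dots> = 2 ^ Suc k * Kp w G s (Suc k) x"
    by (simp add: Kst_def algebra_simps)
  finally show ?case .
qed

definition wt :: "real \<Rightarrow> nat \<Rightarrow> int \<Rightarrow> real" where
  "wt lam i y = exp (- lam * (real_of_int y)^2 / (real i)^2)"

definition del :: "int \<Rightarrow> real" where
  "del y = (if y = 0 then 1 else 0)"

abbreviation one :: "nat \<Rightarrow> int \<Rightarrow> real" where
  "one \<equiv> (\<lambda>_ _. 1)"

lemma Kp_last:
  assumes "\<And>i y. s < i \<Longrightarrow> i \<le> s + k \<Longrightarrow> w i y = 1"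
  shows "Kp w H s (Suc k) x = Kp one (\<lambda>z. w (s + Suc k) z * H z) s (Suc k) x"
proof -
  have "Kp w H s (Suc k) x = Kp w (Kp w H (s+k) 1) s k x"
    using Kp_add[of w H s k 1] by simp
  also have "\<dots> = Kp one (Kp w H (s+k) 1) s k x"
    by (rule Kp_cong_w) (use assms in auto)
  also have "Kp w H (s+k) 1 = Kp one (\<lambda>z. w (s + Suc k) z * H z) (s+k) 1"
    by (auto simp: Kst_def fun_eq_iff)
  also have "Kp one (Kp one (\<lambda>z. w (s + Suc k) z * H z) (s+k) 1) s k x
       = Kp one (\<lambda>z. w (s + Suc k) z * H z) s (Suc k) x"
    using Kp_add[of one "\<lambda>z. w (s + Suc k) z * H z" s k 1] by simp
  finally show ?thesis .
qed

lemma Kp_one_shift': "Kp one G s k x = Kp one G s' k x"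
proof (induction k arbitrary: s s' x)
  case 0 then show ?case by simp
next
  case (Suc k)
  have "Kp one G (Suc s) k = Kp one G (Suc s') k" using Suc.IH by blast
  then show ?case by (simp add: Kst_def)
qed

lemma Kp_one_shift: "Kp one G s k x = Kp one G 0 k x"
  by (rule Kp_one_shift')

lemma cond_pmf_of_set:
  assumes "finite W" "W \<inter> C \<noteq> {}"
  shows "cond_pmf (pmf_of_set W) C = pmf_of_set (W \<inter> C)"
proof -
  have W: "W \<noteq> {}" using assms by auto
  have ne: "set_pmf (pmf_of_set W) \<inter> C \<noteq> {}" using assms W by simp
  show ?thesis
  proof (rule pmf_eqI)
    fix i
    have cW: "card W > 0" using assms W by (simp add: card_gt_0_iff)
    have cWC: "card (W \<inter> C) > 0" using assms by (simp add: card_gt_0_iff)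
    show "pmf (cond_pmf (pmf_of_set W) C) i = pmf (pmf_of_set (W \<inter> C)) i"
      using cW cWC
      by (simp add: pmf_cond[OF ne] measure_pmf_of_set[OF W assms(1)] assms W indicator_def)
  qed
qed

lemma condE_repr:
  fixes n :: nat and lam :: real
  defines "t0 \<equiv> 2 * Apar n - 2" and "N \<equiv> 2 * n - 2"
  assumes t0: "1 \<le> t0" "t0 < N"
    and pos1: "Kp one del 0 t0 0 > 0" and pos2: "Kp one del t0 (N - t0) 0 > 0"
  shows "condE lam n = Kp (wt lam) del t0 (N - t0) 0 / Kp one del t0 (N - t0) 0"
proof -
  define W where "W = walks n"
  have WPi: "W = PiE {0<..0+N} (\<lambda>_. {-1::int,1})"
    unfolding W_def walks_def N_def by (simp add: atLeastSucAtMost_greaterThanAtMost)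
  have finW: "finite W" unfolding WPi by (intro finite_PiE) auto
  define w1 :: "nat \<Rightarrow> int \<Rightarrow> real" where
    "w1 i y = (if i < t0 then 1 else if i = t0 then del y else wt lam i y)" for i y
  define w2 :: "nat \<Rightarrow> int \<Rightarrow> real" where
    "w2 i y = (if i = t0 then del y else 1)" for i y
  define F where "F \<xi> = exp (- lam * Lmain n \<xi>)" for \<xi>
  have Sform: "S \<xi> i = (\<Sum>j\<in>{0<..i}. \<xi> j)" for \<xi> i
    unfolding S_def by (simp add: atLeastSucAtMost_greaterThanAtMost)
  have split: "{0<..N} = {0<..<t0} \<union> ({t0} \<union> {t0<..N})" using t0 by auto
  have Lidx: "{2 * Apar n - 1..2*n-2} = {t0<..N}" unfolding t0_def N_def using t0
    unfolding t0_def N_def by auto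
  have prod1: "(\<Prod>i\<in>{0<..0+N}. w1 i (0 + S \<xi> i)) = del (S \<xi> t0) * F \<xi>" for \<xi>
  proof -
    have "(\<Prod>i\<in>{0<..N}. w1 i (S \<xi> i)) = (\<Prod>i\<in>{0<..<t0}. w1 i (S \<xi> i)) *
        (w1 t0 (S \<xi> t0) * (\<Prod>i\<in>{t0<..N}. w1 i (S \<xi> i)))"
      unfolding split by (subst prod.union_disjoint, auto)+
    also have "(\<Prod>i\<in>{0<..<t0}. w1 i (S \<xi> i)) = 1" by (simp add: w1_def)
    also have "(\<Prod>i\<in>{t0<..N}. w1 i (S \<xi> i)) = (\<Prod>i\<in>{t0<..N}. wt lam i (S \<xi> i))"
      by (intro prod.cong) (auto simp: w1_def)
    also have "\<dots> = F \<xi>"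
      unfolding F_def Lmain_def Lidx wt_def
      by (simp add: exp_sum[symmetric] sum_negf[symmetric] sum_distrib_left)
    finally show ?thesis by (simp add: w1_def)
  qed
  have prod2: "(\<Prod>i\<in>{0<..0+N}. w2 i (0 + S \<xi> i)) = del (S \<xi> t0)" for \<xi>
  proof -
    have "(\<Prod>i\<in>{0<..N}. w2 i (S \<xi> i)) = (\<Prod>i\<in>{0<..<t0}. w2 i (S \<xi> i)) *
        (w2 t0 (S \<xi> t0) * (\<Prod>i\<in>{t0<..N}. w2 i (S \<xi> i)))"
      unfolding split by (subst prod.union_disjoint, auto)+
    then show ?thesis by (simp add: w2_def)
  qed
  have C: "\<xi> \<in> COND n \<longleftrightarrow> S \<xi> t0 = 0 \<and> S \<xi> N = 0" for \<xi>
    unfolding COND_def t0_def N_def by simp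
  have sum1: "(\<Sum>\<xi>\<in>W \<inter> COND n. F \<xi>) = 2^N * Kp w1 del 0 N 0"
  proof -
    have "(\<Sum>\<xi>\<in>W \<inter> COND n. F \<xi>) = (\<Sum>\<xi>\<in>W. del (0 + S \<xi> N) * (del (S \<xi> t0) * F \<xi>))"
      using finW by (subst sum.inter_restrict) (auto intro!: sum.cong simp: C del_def)
    also have "\<dots> = (\<Sum>\<xi>\<in>W. del (0 + (\<Sum>j\<in>{0<..0+N}. \<xi> j)) * (\<Prod>i\<in>{0<..0+N}. w1 i (0 + (\<Sum>j\<in>{0<..i}. \<xi> j))))"
      using prod1 by (simp add: Sform)
    also have "\<dots> = 2^N * Kp w1 del 0 N 0" unfolding WPi by (rule path_sum)
    finally show ?thesis .
  qed
  have sum2: "real (card (W \<inter> COND n)) = 2^N * Kp w2 del 0 N 0"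
  proof -
    have "real (card (W \<inter> COND n)) = (\<Sum>\<xi>\<in>W \<inter> COND n. 1)" by simp
    also have "\<dots> = (\<Sum>\<xi>\<in>W. del (0 + S \<xi> N) * del (S \<xi> t0))"
      using finW by (subst sum.inter_restrict) (auto intro!: sum.cong simp: C del_def)
    also have "\<dots> = (\<Sum>\<xi>\<in>W. del (0 + (\<Sum>j\<in>{0<..0+N}. \<xi> j)) * (\<Prod>i\<in>{0<..0+N}. w2 i (0 + (\<Sum>j\<in>{0<..i}. \<xi> j))))"
      using prod2 by (simp add: Sform)
    also have "\<dots> = 2^N * Kp w2 del 0 N 0" unfolding WPi by (rule path_sum)
    finally show ?thesis .
  qed
  have red: "Kp w del 0 N 0 = Kp (\<lambda>i y. if t0 < i then w i y else w0 i y) del t0 (N - t0) 0 * Kp one del 0 t0 0"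
    if "\<And>i y. i < t0 \<Longrightarrow> w i y = 1" "\<And>y. w t0 y = del y" "\<And>i y. w0 i y = w i y"
    for w w0 :: "nat \<Rightarrow> int \<Rightarrow> real"
  proof -
    define H where "H = Kp w del t0 (N - t0)"
    have "Kp w del 0 N 0 = Kp w H 0 t0 0"
      unfolding H_def using Kp_add[of w del 0 t0 "N - t0"] t0 by simp
    also obtain k where k: "t0 = Suc k" using t0 by (cases t0) auto
    have "Kp w H 0 t0 0 = Kp one (\<lambda>z. w (0 + Suc k) z * H z) 0 (Suc k) 0"
      unfolding k by (rule Kp_last) (use that k in auto)
    also have "(\<lambda>z. w (0 + Suc k) z * H z) = (\<lambda>z. H 0 * del z)"
      using that(2) k by (auto simp: del_def fun_eq_iff)
    also have "Kp one (\<lambda>z. H 0 * del z) 0 (Suc k) 0 = H 0 * Kp one del 0 t0 0"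
      unfolding k by (rule Kp_linear)
    also have "H 0 = Kp (\<lambda>i y. if t0 < i then w i y else w0 i y) del t0 (N - t0) 0"
      unfolding H_def by (rule Kp_cong_w) auto
    finally show ?thesis .
  qed
  have r1: "Kp w1 del 0 N 0 = Kp (wt lam) del t0 (N - t0) 0 * Kp one del 0 t0 0"
  proof -
    have "Kp w1 del 0 N 0 = Kp (\<lambda>i y. if t0 < i then w1 i y else w1 i y) del t0 (N - t0) 0 * Kp one del 0 t0 0"
      by (rule red) (auto simp: w1_def)
    also have "Kp (\<lambda>i y. if t0 < i then w1 i y else w1 i y) del t0 (N - t0) 0 = Kp (wt lam) del t0 (N - t0) 0"
      by (rule Kp_cong_w) (auto simp: w1_def)
    finally show ?thesis .
  qed
  have r2: "Kp w2 del 0 N 0 = Kp one del t0 (N - t0) 0 * Kp one del 0 t0 0"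
  proof -
    have "Kp w2 del 0 N 0 = Kp (\<lambda>i y. if t0 < i then w2 i y else w2 i y) del t0 (N - t0) 0 * Kp one del 0 t0 0"
      by (rule red) (auto simp: w2_def)
    also have "Kp (\<lambda>i y. if t0 < i then w2 i y else w2 i y) del t0 (N - t0) 0 = Kp one del t0 (N - t0) 0"
      by (rule Kp_cong_w) (auto simp: w2_def)
    finally show ?thesis .
  qed
  have cpos: "real (card (W \<inter> COND n)) > 0" using sum2 r2 pos1 pos2 by simp
  then have ne: "W \<inter> COND n \<noteq> {}" by (auto)
  have "condE lam n = (\<Sum>\<xi>\<in>W \<inter> COND n. F \<xi>) / real (card (W \<inter> COND n))"
    unfolding condE_def walk_pmf_def W_def[symmetric] cond_pmf_of_set[OF finW ne] F_def
    using ne finW by (simp add: integral_pmf_of_set)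
  also have "\<dots> = Kp (wt lam) del t0 (N - t0) 0 / Kp one del t0 (N - t0) 0"
    unfolding sum1 sum2 r1 r2 using pos1 by simp
  finally show ?thesis .
qed

definition q :: "nat \<Rightarrow> int \<Rightarrow> real" where
  "q L x = Kp one del 0 L x"

lemma q_0: "q 0 x = del x" by (simp add: q_def)

lemma q_Suc: "q (Suc L) x = (q L (x+1) + q L (x-1)) / 2"
proof -
  have "Kp one del (Suc 0) L = Kp one del 0 L" by (rule ext, rule Kp_one_shift')
  then show ?thesis unfolding q_def by (simp add: Kst_def)
qed

lemma q_nonneg: "q L x \<ge> 0"
  by (induction L arbitrary: x) (auto simp: q_0 q_Suc del_def)

lemma q_zero: "odd (int L + x) \<or> x < - int L \<or> x > int L \<Longrightarrow> q L x = 0"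
proof (induction L arbitrary: x)
  case 0 then show ?case by (auto simp: q_0 del_def)
next
  case (Suc L)
  have "q L (x+1) = 0" by (rule Suc.IH) (use Suc.prems in auto)
  moreover have "q L (x-1) = 0" by (rule Suc.IH) (use Suc.prems in auto)
  ultimately show ?case by (simp add: q_Suc)
qed

lemma q_closed: "q L (2 * int k - int L) = real (L choose k) / 2^L"
proof (induction L arbitrary: k)
  case 0
  then show ?case by (cases k) (auto simp: q_0 del_def)
next
  case (Suc L)
  show ?case
  proof (cases k)
    case 0
    have "q L (2 * int k - int (Suc L) + 1) = q L (2 * int 0 - int L)" using 0 by simp
    also have "\<dots> = 1 / 2^L" using Suc.IH[of 0] by simp
    finally have a: "q L (2 * int k - int (Suc L) + 1) = 1 / 2^L" .
    have b: "q L (2 * int k - int (Suc L) - 1) = 0" by (rule q_zero) (use 0 in auto)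
    show ?thesis using a b 0 by (simp add: q_Suc)
  next
    case (Suc j)
    have a: "q L (2 * int k - int (Suc L) + 1) = real (L choose k) / 2^L"
      using Suc.IH[of k] by (simp add: algebra_simps)
    have b: "q L (2 * int k - int (Suc L) - 1) = real (L choose j) / 2^L"
      using Suc.IH[of j] Suc by (simp add: algebra_simps)
    show ?thesis using a b Suc by (simp add: q_Suc field_simps)
  qed
qed

lemma q_cases:
  obtains "q L x = 0" | k where "k \<le> L" "x = 2 * int k - int L"
proof (cases "odd (int L + x) \<or> x < - int L \<or> x > int L")
  case True then show ?thesis using q_zero that(1) by blast
next
  case False
  then have "even (int L + x)" by simp
  then obtain m where m: "int L + x = 2 * m" by (rule evenE)
  have "m \<ge> 0" "m \<le> int L" using False m by auto
  then show ?thesis using that(2)[of "nat m"] m by auto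
qed

lemma q_sym: "q L (-x) = q L x"
proof (induction L arbitrary: x)
  case 0 then show ?case by (simp add: q_0 del_def)
next
  case (Suc L)
  have "q L (-x + 1) = q L (x - 1)" using Suc.IH[of "x - 1"] by simp
  moreover have "q L (-x - 1) = q L (x + 1)" using Suc.IH[of "x + 1"] by simp
  ultimately show ?case by (simp add: q_Suc)
qed

lemma q_bound_mono: "(\<And>x. q L x \<le> M) \<Longrightarrow> q (L + j) x \<le> M"
proof (induction j arbitrary: x)
  case 0 then show ?case by simp
next
  case (Suc j)
  have "q (L + j) (x+1) \<le> M" "q (L + j) (x-1) \<le> M" using Suc by auto
  then show ?case by (simp add: q_Suc)
qed

lemma q_bridge_plus: "q L (x+1) * real (Suc L) = q (Suc L) x * (real (Suc L) - real_of_int x)"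
proof (cases rule: q_cases[of "Suc L" x])
  case 1
  then have z: "q L (x+1) = 0"
  proof -
    have "odd (int (Suc L) + x) \<or> x < - int (Suc L) \<or> x > int (Suc L) \<or> x = int (Suc L)"
    proof (rule ccontr)
      assume "\<not> ?thesis"
      then have ev: "even (int (Suc L) + x)" "- int (Suc L) \<le> x" "x < int (Suc L)" by auto
      from ev(1) obtain m where m: "int (Suc L) + x = 2 * m" by (rule evenE)
      then have "q (Suc L) x = real (Suc L choose nat m) / 2 ^ Suc L"
        using q_closed[of "Suc L" "nat m"] \<open>- int (Suc L) \<le> x\<close>
        by (smt (verit, best) nat_0_le)
      moreover have "nat m \<le> Suc L" using m \<open>x < int (Suc L)\<close> by linarith
      ultimately have "q (Suc L) x > 0" by simp
      then show False using 1 by simp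
    qed
    then show ?thesis
      by (elim disjE) (auto intro!: q_zero)
  qed
  show ?thesis using z 1 by simp
next
  case (2 k)
  show ?thesis
  proof (cases "k = Suc L")
    case True
    have "q L (x+1) = 0" by (rule q_zero) (use 2 True in auto)
    then show ?thesis using 2 True by simp
  next
    case False
    then have kL: "k \<le> L" using 2 by simp
    have "x + 1 = 2 * int k - int L" using 2 by simp
    then have a: "q L (x+1) = real (L choose k) / 2^L"
      using q_closed[of L k] by simp
    have b: "q (Suc L) x = real (Suc L choose k) / 2^Suc L" using q_closed[of "Suc L" k] 2 by simp
    have c: "real (Suc L) - real_of_int x = 2 * real (Suc L - k)" using 2 kL by simp
    have d: "real (Suc L - k) * real (Suc L choose k) = real (Suc L) * real (L choose k)"
      using binomial_absorb_comp[of "Suc L" k] by (metis diff_Suc_1 of_nat_mult)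
    show ?thesis unfolding a b c using d by (simp add: field_simps)
  qed
qed

lemma q_bridge_minus: "q L (x-1) * real (Suc L) = q (Suc L) x * (real (Suc L) + real_of_int x)"
proof -
  have "q L ((-x)+1) * real (Suc L) = q (Suc L) (-x) * (real (Suc L) - real_of_int (-x))"
    by (rule q_bridge_plus)
  moreover have "q L ((-x)+1) = q L (x-1)" using q_sym[of L "x - 1"] by simp
  ultimately show ?thesis by (simp add: q_sym)
qed

lemma q_pos_central: "q (2*m) 0 > 0"
  using q_closed[of "2*m" m] by simp

lemma q_max_central: "q (2*m) x \<le> q (2*m) 0"
proof (cases rule: q_cases[of "2*m" x])
  case 1 then show ?thesis using q_nonneg by simp
next
  case (2 k)
  have "q (2*m) x = real ((2*m) choose k) / 2^(2*m)" using 2 q_closed[of "2*m" k] by simp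
  also have "\<dots> \<le> real ((2*m) choose m) / 2^(2*m)"
    by (intro divide_right_mono) (simp_all add: binomial_maximum')
  also have "\<dots> = q (2*m) 0" using q_closed[of "2*m" m] by simp
  finally show ?thesis .
qed

lemma binom_tail:
  assumes "j \<le> m" "m \<ge> 1"
  shows "real ((2*m) choose (m+j)) \<le> real ((2*m) choose m) * exp (- ((real j)^2) / (2 * real m))"
  using assms(1)
proof (induction j)
  case 0 then show ?case by simp
next
  case (Suc j)
  have jm: "j < m" using Suc by simp
  have id: "real (Suc (m+j)) * real ((2*m) choose Suc (m+j)) = real (2*m - (m+j)) * real ((2*m) choose (m+j))"
    using binomial_absorption[of "m+j" "2*m"] binomial_absorb_comp[of "2*m" "m+j"]
    by (metis of_nat_mult)
  have e: "real (2*m - (m+j)) = real m - real j" using jm by simp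
  have r: "real ((2*m) choose Suc (m+j)) = real ((2*m) choose (m+j)) * ((real m - real j) / (real m + real j + 1))"
    using id e by (simp add: field_simps)
  have f: "(real m - real j) / (real m + real j + 1) \<le> exp (- (2 * real j + 1) / (2 * real m))"
  proof -
    have "(real m - real j) / (real m + real j + 1) = 1 - (2 * real j + 1) / (real m + real j + 1)"
      by (simp add: field_simps)
    also have "\<dots> \<le> 1 - (2 * real j + 1) / (2 * real m)"
      using jm by (intro diff_left_mono divide_left_mono) auto
    also have "\<dots> = 1 + (- (2 * real j + 1) / (2 * real m))" by (simp only: minus_divide_left diff_conv_add_uminus)
    also have "\<dots> \<le> exp (- (2 * real j + 1) / (2 * real m))" by (rule exp_ge_add_one_self)
    finally show ?thesis .
  qed
  have "real ((2*m) choose (m + Suc j)) = real ((2*m) choose (m+j)) * ((real m - real j) / (real m + real j + 1))"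
    using r by simp
  also have "\<dots> \<le> real ((2*m) choose m) * exp (- ((real j)^2) / (2 * real m)) * exp (- (2 * real j + 1) / (2 * real m))"
    using Suc jm f by (intro mult_mono) auto
  also have "\<dots> = real ((2*m) choose m) * (exp (- ((real j)^2) / (2 * real m)) * exp (- (2 * real j + 1) / (2 * real m)))"
    by (simp only: mult.assoc)
  also have "exp (- ((real j)^2) / (2 * real m)) * exp (- (2 * real j + 1) / (2 * real m)) = exp (- ((real (Suc j))^2) / (2 * real m))"
  proof -
    have sq: "(real (Suc j))^2 = (real j)^2 + (2 * real j + 1)" by (simp add: power2_eq_square algebra_simps)
    have "- ((real j)^2) / (2 * real m) + - (2 * real j + 1) / (2 * real m) = (- ((real j)^2) + - (2 * real j + 1)) / (2 * real m)"
      by (rule add_divide_distrib[symmetric])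
    also have "\<dots> = - ((real (Suc j))^2) / (2 * real m)" unfolding sq by simp
    finally show ?thesis by (simp only: exp_add[symmetric])
  qed
  finally show ?case .
qed

lemma q_gauss:
  assumes "m \<ge> 1"
  shows "q (2*m) x \<le> q (2*m) 0 * exp (- ((real_of_int x)^2) / (8 * real m))"
proof -
  have main: "q (2*m) x \<le> q (2*m) 0 * exp (- ((real_of_int x)^2) / (8 * real m))" if "x \<ge> 0" for x
  proof (cases rule: q_cases[of "2*m" x])
    case 1 then show ?thesis using q_nonneg[of "2*m" 0] by simp
  next
    case (2 k)
    then have km: "k \<ge> m" using that by simp
    define j where "j = k - m"
    have k: "k = m + j" "j \<le> m" using km 2 unfolding j_def by auto
    have x: "real_of_int x = 2 * real j" using 2 k by simp
    have "q (2*m) x = q (2*m) (2 * int (m+j) - int (2*m))" using 2(2) k(1) by simp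
    also have "\<dots> = real ((2*m) choose (m+j)) / 2^(2*m)" by (rule q_closed)
    finally have "q (2*m) x = real ((2*m) choose (m+j)) / 2^(2*m)" .
    also have "\<dots> \<le> real ((2*m) choose m) * exp (- ((real j)^2) / (2 * real m)) / 2^(2*m)"
      by (intro divide_right_mono binom_tail k assms) auto
    also have "\<dots> = q (2*m) 0 * exp (- ((real_of_int x)^2) / (8 * real m))"
      using q_closed[of "2*m" m] unfolding x by (simp add: power2_eq_square field_simps)
    finally show ?thesis .
  qed
  show ?thesis
  proof (cases "x \<ge> 0")
    case True then show ?thesis using main by simp
  next
    case False
    then show ?thesis using main[of "-x"] q_sym[of "2*m" x] by simp
  qed
qed

lemma central_rec: "q (2*(Suc m)) 0 * (2 * real m + 2) = q (2*m) 0 * (2 * real m + 1)"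
proof -
  have a: "(2*m+2) * ((2*m+1) choose m) = ((2*m+2) choose (m+1)) * (m+1)"
    using Suc_times_binomial_eq[of "2*m+1" m] by simp
  have b: "(2*m+1) * ((2*m) choose m) = ((2*m+1) choose (m+1)) * (m+1)"
    using Suc_times_binomial_eq[of "2*m" m] by simp
  have c: "(2*m+1) choose (m+1) = (2*m+1) choose m"
    using binomial_symmetric[of "m+1" "2*m+1"] by simp
  define A where "A = real ((2*m+2) choose (m+1))"
  define B where "B = real ((2*m+1) choose m)"
  define Cc where "Cc = real ((2*m) choose m)"
  have a': "(2 * real m + 2) * B = A * (real m + 1)"
    unfolding A_def B_def using arg_cong[OF a, of real] by (simp del: binomial_Suc_Suc add: algebra_simps)
  have b2: "(2*m+1) * ((2*m) choose m) = ((2*m+1) choose m) * (m+1)"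
    using b unfolding c .
  have b': "(2 * real m + 1) * Cc = B * (real m + 1)"
    unfolding Cc_def B_def using arg_cong[OF b2, of real] by (simp del: binomial_Suc_Suc add: algebra_simps)
  have id: "A*(real m+1)^2 - (2*real m+2)*(2*real m+1)*Cc = (real m+1)*(A*(real m+1) - (2*real m+2)*B) + (2*real m+2)*(B*(real m+1) - (2*real m+1)*Cc)"
    by (simp add: algebra_simps power2_eq_square)
  have d: "A * (real m + 1) = 2 * (2 * real m + 1) * Cc"
  proof -
    have "A * (real m + 1) = (2 * real m + 2) * B" using a' by simp
    also have "\<dots> = 2 * (B * (real m + 1))" by (simp add: algebra_simps)
    also have "\<dots> = 2 * ((2 * real m + 1) * Cc)" using b' by simp
    finally show ?thesis by simp
  qed
  have e: "q (2*(Suc m)) 0 = A / 2^(2*m+2)"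
    using q_closed[of "2*Suc m" "Suc m"] unfolding A_def by simp
  have f: "q (2*m) 0 = Cc / 2^(2*m)"
    using q_closed[of "2*m" m] unfolding Cc_def by simp
  have g: "q (2*(Suc m)) 0 * (2 * real m + 2) = q (2*m) 0 * (2 * real m + 1)"
  proof -
    have "q (2*(Suc m)) 0 * (2 * real m + 2) = 2 * (A * (real m + 1)) / (4 * 2^(2*m))"
      unfolding e by (simp add: power_add algebra_simps)
    also have "\<dots> = q (2*m) 0 * (2 * real m + 1)" unfolding d f by (simp add: divide_simps)
    finally show ?thesis .
  qed
  show ?thesis using g by simp
qed

lemma central_step: "(q (2*m) 0)^2 * real m \<le> (q (2*Suc m) 0)^2 * real (Suc m)"
proof -
  define Q where "Q = q (2*m) 0"
  define Q' where "Q' = q (2*Suc m) 0"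
  have g: "Q' * (2 * real m + 2) = Q * (2 * real m + 1)" unfolding Q_def Q'_def by (rule central_rec)
  have poly: "real m * (2 * real m + 2)^2 \<le> (2 * real m + 1)^2 * (real m + 1)"
    by (simp add: power2_eq_square algebra_simps)
  have "(Q^2 * real m) * (2 * real m + 2)^2 = Q^2 * (real m * (2 * real m + 2)^2)" by (simp only: mult.assoc)
  also have "\<dots> \<le> Q^2 * ((2 * real m + 1)^2 * (real m + 1))" by (intro mult_left_mono poly) simp
  also have "\<dots> = (Q * (2 * real m + 1))^2 * (real m + 1)" by (simp only: power_mult_distrib mult.assoc)
  also have "\<dots> = (Q' * (2 * real m + 2))^2 * (real m + 1)" by (simp only: g)
  also have "\<dots> = (Q'^2 * real (Suc m)) * (2 * real m + 2)^2" by (simp add: power_mult_distrib)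
  finally have "(Q^2 * real m) * (2 * real m + 2)^2 \<le> (Q'^2 * real (Suc m)) * (2 * real m + 2)^2" .
  then have "Q^2 * real m \<le> Q'^2 * real (Suc m)" by (rule mult_right_le_imp_le) simp
  then show ?thesis unfolding Q_def Q'_def .
qed

lemma central_ratio:
  assumes "l \<le> m"
  shows "(q (2*l) 0)^2 * real l \<le> (q (2*m) 0)^2 * real m"
  using assms
proof (induction m)
  case 0 then show ?case by simp
next
  case (Suc m)
  show ?case
  proof (cases "l = Suc m")
    case True then show ?thesis by simp
  next
    case False
    then have "(q (2*l) 0)^2 * real l \<le> (q (2*m) 0)^2 * real m" using Suc by simp
    also have "\<dots> \<le> (q (2*Suc m) 0)^2 * real (Suc m)" by (rule central_step)
    finally show ?thesis .
  qed
qed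

section \<open>Elementary real inequalities\<close>

lemma cosh_le_exp: "(exp (y::real) + exp (- y)) / 2 \<le> exp (y^2 / 2)"
proof -
  have main: "(exp a + exp (- a)) / 2 \<le> exp (a^2 / 2)" if "a \<ge> 0" for a :: real
  proof -
    define C where "C = (exp a + exp (- a)) / 2"
    have Cpos: "C > 0" unfolding C_def by (intro divide_pos_pos add_pos_pos) auto
    have H: "- (2*a) * (1/2) + ln (1 + (1/2) * (exp (2*a) - 1)) \<le> (2*a)^2 / 8"
      using Hoeffdings_lemma_aux[of "2*a" "1/2"] that by simp
    have X: "1 + (1/2) * (exp (2*a) - 1) = exp a * C"
    proof -
      have e1: "exp (2*a) = exp a * exp a" by (simp add: mult_exp_exp)
      have e2: "exp a * exp (- a) = 1" by (simp add: mult_exp_exp)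
      show ?thesis unfolding e1 C_def using e2 by (simp add: algebra_simps)
    qed
    have Y: "ln (exp a * C) = a + ln C" using Cpos by (simp add: ln_mult)
    have "ln C \<le> a^2 / 2" using H unfolding X Y by (simp add: power2_eq_square)
    then have "exp (ln C) \<le> exp (a^2 / 2)" by simp
    then show ?thesis unfolding C_def[symmetric] using Cpos by simp
  qed
  show ?thesis
  proof (cases "y \<ge> 0")
    case True then show ?thesis using main by simp
  next
    case False then show ?thesis using main[of "-y"] by (simp add: add.commute)
  qed
qed

lemma sinh_ge_self: "a \<ge> 0 \<Longrightarrow> (exp a - exp (- a)) / 2 \<ge> (a::real)"
proof -
  assume a: "a \<ge> 0"
  let ?f = "\<lambda>t::real. (exp t - exp (- t)) / 2 - t"
  have "?f 0 \<le> ?f a"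
  proof (rule DERIV_nonneg_imp_nondecreasing[OF a])
    fix t :: real
    have d: "DERIV ?f t :> (exp t + exp (- t)) / 2 - 1"
      by (auto intro!: derivative_eq_intros)
    have "exp t + exp (- t) \<ge> 2"
      using exp_ge_add_one_self[of t] exp_ge_add_one_self[of "-t"] by linarith
    then have "(exp t + exp (- t)) / 2 - 1 \<ge> 0" by simp
    then show "\<exists>y. DERIV ?f t :> y \<and> y \<ge> 0" using d by blast
  qed
  then show ?thesis by simp
qed

lemma cosh_ge_quad: "(exp (y::real) + exp (- y)) / 2 \<ge> 1 + y^2 / 2"
proof -
  have main: "(exp a + exp (- a)) / 2 \<ge> 1 + a^2 / 2" if a: "a \<ge> 0" for a :: real
  proof -
    let ?f = "\<lambda>t::real. (exp t + exp (- t)) / 2 - t^2 / 2"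
    have "?f 0 \<le> ?f a"
    proof (rule DERIV_nonneg_imp_nondecreasing[OF a])
      fix t :: real assume t: "0 \<le> t"
      have d: "DERIV ?f t :> (exp t - exp (- t)) / 2 - t"
        by (auto intro!: derivative_eq_intros simp: power2_eq_square)
      have "(exp t - exp (- t)) / 2 - t \<ge> 0" using sinh_ge_self[OF t] by simp
      then show "\<exists>y. DERIV ?f t :> y \<and> y \<ge> 0" using d by blast
    qed
    then have "1 \<le> (exp a + exp (- a)) / 2 - a^2 / 2" by simp
    then show ?thesis by linarith
  qed
  show ?thesis
  proof (cases "y \<ge> 0")
    case True then show ?thesis using main by simp
  next
    case False then show ?thesis using main[of "-y"] by (simp add: add.commute)
  qed
qed

lemma cosh_lower_exp:
  fixes y :: real
  assumes "y^2 \<le> 2"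
  shows "(exp y + exp (- y)) / 2 \<ge> exp (y^2 / 2 - y^4 / 4)"
proof -
  have u: "0 \<le> y^2 / 2" "y^2 / 2 \<le> 1" using assms by auto
  have "y^2 / 2 - (y^2 / 2)^2 \<le> ln (1 + y^2 / 2)" by (rule ln_one_plus_pos_lower_bound[OF u])
  moreover have "(y^2 / 2)^2 = y^4 / 4" by (simp add: power2_eq_square power4_eq_xxxx)
  ultimately have "exp (y^2 / 2 - y^4 / 4) \<le> 1 + y^2 / 2"
    by (metis add_pos_nonneg exp_le_cancel_iff exp_ln u(1) zero_less_one)
  also have "\<dots> \<le> (exp y + exp (- y)) / 2" by (rule cosh_ge_quad)
  finally show ?thesis .
qed

lemma exp_ge_sq4: "w \<ge> 0 \<Longrightarrow> exp (w::real) \<ge> w^2 / 4"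
proof -
  assume w: "w \<ge> 0"
  have e: "exp w = (exp (w/2))^2" by (simp add: power2_eq_square mult_exp_exp)
  have "exp (w/2) \<ge> w/2" using exp_ge_add_one_self[of "w/2"] by linarith
  then have "(w/2)^2 \<le> (exp (w/2))^2" using w by (intro power_mono) auto
  then show ?thesis unfolding e by (simp add: power_divide)
qed

lemma inv_sqrt_diff: "s \<ge> 1 \<Longrightarrow> 1 / sqrt s - 1 / sqrt (s + 1) \<ge> 1 / (6 * (s * sqrt s))"
proof -
  assume s: "s \<ge> (1::real)"
  define a where "a = sqrt s"
  define a' where "a' = sqrt (s + 1)"
  have a1: "a \<ge> 1" unfolding a_def using s by simp
  have aa: "a * a = s" "a' * a' = s + 1" unfolding a_def a'_def using s by auto
  have a'pos: "a' > 0" unfolding a'_def using s by simp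
  have a'ge: "a' \<ge> a" unfolding a_def a'_def by simp
  have a'le: "a' \<le> 2 * a"
  proof (rule ccontr)
    assume "\<not> a' \<le> 2 * a"
    then have "a' > 2 * a" by simp
    then have "a' * a' > (2 * a) * (2 * a)" using a1 by (intro mult_strict_mono) auto
    moreover have "a * a \<ge> 1" using a1 mult_mono[of 1 a 1 a] by simp
    moreover have "(2 * a) * (2 * a) = 4 * (a * a)" by simp
    ultimately show False using aa by linarith
  qed
  have diff: "1 / a - 1 / a' = 1 / (a * a' * (a + a'))"
  proof -
    have "(1 / a - 1 / a') * (a * a' * (a + a')) = (a' - a) * (a + a')"
      using a1 a'pos by (simp add: algebra_simps)
    also have "\<dots> = a' * a' - a * a" by (simp add: algebra_simps)
    also have "\<dots> = 1" using aa by simp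
    finally have "(1 / a - 1 / a') * (a * a' * (a + a')) = 1" .
    moreover have "a * a' * (a + a') > 0" using a1 a'pos by simp
    ultimately show ?thesis using a1 a'pos by (simp add: eq_divide_eq)
  qed
  have le: "a * a' * (a + a') \<le> 6 * (a * a * a)"
  proof -
    have "a * a' \<le> a * (2 * a)" using a1 a'le by (intro mult_left_mono) auto
    moreover have "a + a' \<le> 3 * a" using a'le by simp
    ultimately have "a * a' * (a + a') \<le> (a * (2 * a)) * (3 * a)"
      using a1 a'pos by (intro mult_mono) auto
    then show ?thesis by (simp add: algebra_simps)
  qed
  have "1 / (6 * (a * a * a)) \<le> 1 / (a * a' * (a + a'))"
    using le a1 a'pos by (intro divide_left_mono) auto
  then have "1 / (6 * (a * a * a)) \<le> 1 / a - 1 / a'" using diff by simp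
  moreover have "a * a * a = s * sqrt s" using aa(1) unfolding a_def by simp
  ultimately show ?thesis unfolding a_def a'_def using s by simp
qed

definition hh :: "real \<Rightarrow> nat \<Rightarrow> int \<Rightarrow> real" where
  "hh c s x = (real s) powr c * exp (- c * (real_of_int x)^2 / real s)"

lemma E2_identity:
  fixes c lam s u :: real
  assumes "u = s + 1" "s > 0"
  shows "c / s - (lam + c * u) / u^2 + 2 * ((lam + c * u) / u^2)^2
       = ((c - lam + 2*c^2) * u^3 + (lam + 4*lam*c - 2*c^2) * u^2 + (2*lam^2 - 4*lam*c) * u - 2*lam^2) / (s * u^4)"
proof -
  have u0: "u > 0" using assms by simp
  have "c / s - (lam + c * u) / u^2 + 2 * ((lam + c * u) / u^2)^2
      = (c * u^4 - s * u^2 * (lam + c * u) + 2 * s * (lam + c * u)^2) / (s * u^4)"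
  proof -
    have s0: "s \<noteq> 0" and u0': "u \<noteq> 0" using assms u0 by auto
    show ?thesis using s0 u0' by (simp add: field_simps power2_eq_square power4_eq_xxxx)
  qed
  also have "c * u^4 - s * u^2 * (lam + c * u) + 2 * s * (lam + c * u)^2
      = (c - lam + 2*c^2) * u^3 + (lam + 4*lam*c - 2*c^2) * u^2 + (2*lam^2 - 4*lam*c) * u - 2*lam^2"
  proof -
    have s': "s = u - 1" using assms(1) by simp
    show ?thesis unfolding s' by (simp add: power2_eq_square power3_eq_cube power4_eq_xxxx algebra_simps)
  qed
  finally show ?thesis .
qed

lemma E2_neg:
  fixes c lam s u :: real
  assumes u: "u = s + 1" "s > 0" and c: "c \<ge> 0" "lam \<ge> 0"
    and kap: "lam - c - 2*c^2 > 0"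
    and thr: "u \<ge> (lam + 4*lam*c + 2*lam^2) / (lam - c - 2*c^2)"
  shows "c / s - (lam + c * u) / u^2 + 2 * ((lam + c * u) / u^2)^2 \<le> 0"
proof -
  define k where "k = lam - c - 2*c^2"
  define K where "K = lam + 4*lam*c + 2*lam^2"
  have u1: "u \<ge> 1" using u by simp
  have uu: "u^2 \<ge> u" using u1 by (simp add: power2_eq_square)
  have P: "(c - lam + 2*c^2) * u^3 + (lam + 4*lam*c - 2*c^2) * u^2 + (2*lam^2 - 4*lam*c) * u - 2*lam^2
      \<le> u^2 * (K - k * u)"
  proof -
    have d: "u^2 * (K - k * u) - ((c - lam + 2*c^2) * u^3 + (lam + 4*lam*c - 2*c^2) * u^2 + (2*lam^2 - 4*lam*c) * u - 2*lam^2)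
        = 2*lam^2 * (u^2 - u) + 2*c^2*u^2 + 4*lam*c*u + 2*lam^2"
      unfolding K_def k_def by (simp add: power2_eq_square power3_eq_cube algebra_simps)
    have "0 \<le> 2*lam^2 * (u^2 - u) + 2*c^2*u^2 + 4*lam*c*u + 2*lam^2"
      using uu c u1 by (intro add_nonneg_nonneg mult_nonneg_nonneg) auto
    then show ?thesis using d by linarith
  qed
  have "k * u \<ge> K" using thr kap unfolding k_def K_def by (simp add: divide_le_eq mult.commute)
  then have "u^2 * (K - k * u) \<le> 0" by (intro mult_nonneg_nonpos) auto
  with P have num: "(c - lam + 2*c^2) * u^3 + (lam + 4*lam*c - 2*c^2) * u^2 + (2*lam^2 - 4*lam*c) * u - 2*lam^2 \<le> 0"
    by linarith
  have "s * u^4 > 0" using u by simp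
  then show ?thesis unfolding E2_identity[OF u] using num by (simp add: divide_nonpos_pos)
qed

lemma E2_pos:
  fixes b lam s u :: real
  assumes u: "u = s + 1" "s > 0" and b: "b > 0" and lam: "lam = b + 2*b^2"
    and thr: "u \<ge> (4*lam*b + 2*lam^2) / (b + 4*b^2 + 8*b^3)"
  shows "b / s - (lam + b * u) / u^2 + 2 * ((lam + b * u) / u^2)^2 \<ge> 0"
proof -
  define k where "k = b + 4*b^2 + 8*b^3"
  have kpos: "k > 0" unfolding k_def using b by (intro add_pos_nonneg) auto
  have u1: "u \<ge> 1" using u by simp
  have lam0: "lam \<ge> 0" using lam b by simp
  have id: "(b - lam + 2*b^2) * u^3 + (lam + 4*lam*b - 2*b^2) * u^2 + (2*lam^2 - 4*lam*b) * u - 2*lam^2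
      = k * u^2 + (2*lam^2 - 4*lam*b) * u - 2*lam^2"
    unfolding k_def lam by (simp add: power2_eq_square power3_eq_cube algebra_simps)
  have "k * u \<ge> 4*lam*b + 2*lam^2" using thr kpos unfolding k_def by (simp add: divide_le_eq mult.commute)
  then have "k * u * u \<ge> (4*lam*b + 2*lam^2) * u" using u1 by (intro mult_right_mono) auto
  moreover have "(4*lam*b + 2*lam^2) * u \<ge> 4*lam*b*u + 2*lam^2"
  proof -
    have "lam^2 * 1 \<le> lam^2 * u" by (rule mult_left_mono) (use u1 in auto)
    then show ?thesis by (simp add: algebra_simps)
  qed
  moreover have "2*lam^2*u \<ge> 0" using u1 by simp
  ultimately have "k * u^2 + (2*lam^2 - 4*lam*b) * u - 2*lam^2 \<ge> 0"
    by (simp add: power2_eq_square algebra_simps)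
  then have num: "(b - lam + 2*b^2) * u^3 + (lam + 4*lam*b - 2*b^2) * u^2 + (2*lam^2 - 4*lam*b) * u - 2*lam^2 \<ge> 0"
    using id by simp
  have "s * u^4 > 0" using u by simp
  then show ?thesis unfolding E2_identity[OF u] using num by simp
qed

lemma hh_exp: "s \<ge> 1 \<Longrightarrow> hh c s x = exp (c * ln (real s) - c * (real_of_int x)^2 / real s)"
  unfolding hh_def powr_def by (simp add: exp_diff exp_add[symmetric] algebra_simps)

lemma wh_eq:
  "wt lam (Suc s) y * hh c (Suc s) y
     = exp (c * ln (real s + 1) - ((lam + c * (real s + 1)) / (real s + 1)^2) * (real_of_int y)^2)"
proof -
  have u: "real (Suc s) = real s + 1" by simp
  have pos: "real s + 1 > 0" by simp
  have "wt lam (Suc s) y * hh c (Suc s) y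
      = exp (- lam * (real_of_int y)^2 / (real s + 1)^2 + (c * ln (real s + 1) - c * (real_of_int y)^2 / (real s + 1)))"
    unfolding wt_def hh_def powr_def u using pos by (simp add: mult_exp_exp algebra_simps)
  also have "- lam * (real_of_int y)^2 / (real s + 1)^2 + (c * ln (real s + 1) - c * (real_of_int y)^2 / (real s + 1))
      = c * ln (real s + 1) - ((lam + c * (real s + 1)) / (real s + 1)^2) * (real_of_int y)^2"
  proof -
    have gen: "- lam * Y / v^2 + (c * l - c * Y / v) = c * l - ((lam + c * v) / v^2) * Y" if "v > 0" for v Y l :: real
      using that by (simp add: field_simps power2_eq_square)
    show ?thesis by (rule gen) (use pos in simp)
  qed
  finally show ?thesis .
qed

lemma exp_split_pm:
  fixes B X :: real
  shows "exp (K - B * (X + 1)^2) = exp (K - B * (X^2 + 1)) * exp (- (2 * B * X))"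
    and "exp (K - B * (X - 1)^2) = exp (K - B * (X^2 + 1)) * exp (2 * B * X)"
  by (simp_all add: exp_add[symmetric] power2_eq_square algebra_simps)

lemma super_h:
  fixes c lam :: real and s :: nat
  assumes c: "c \<ge> 0" "lam \<ge> 0" and kap: "lam - c - 2*c^2 > 0" and s: "s \<ge> 1"
    and thr: "real s + 1 \<ge> (lam + 4*lam*c + 2*lam^2) / (lam - c - 2*c^2)"
  shows "Kst (wt lam) s (hh c (Suc s)) x \<le> hh c s x"
proof -
  define u where "u = real s + 1"
  define B where "B = (lam + c * u) / u^2"
  define X where "X = real_of_int x"
  define K where "K = c * ln u"
  have s0: "real s > 0" using s by simp
  have u: "u = real s + 1" by (simp add: u_def)
  have B0: "B \<ge> 0" unfolding B_def u_def using c by simp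
  have E2: "c / real s - B + 2 * B^2 \<le> 0"
    unfolding B_def by (rule E2_neg[OF u s0 c kap]) (use thr u_def in simp)
  have E1: "c / real s - B \<le> 0" using E2 by (smt (verit) zero_le_power2)
  have k: "Kst (wt lam) s (hh c (Suc s)) x = exp (K - B * (X + 1)^2) / 2 + exp (K - B * (X - 1)^2) / 2"
    unfolding Kst_def wh_eq K_def B_def X_def u_def by (simp add: add_divide_distrib)
  also have "\<dots> = exp (K - B * (X^2 + 1)) * ((exp (2 * B * X) + exp (- (2 * B * X))) / 2)"
    unfolding exp_split_pm by (simp add: algebra_simps add_divide_distrib)
  also have "\<dots> \<le> exp (K - B * (X^2 + 1)) * exp ((2 * B * X)^2 / 2)"
    by (intro mult_left_mono cosh_le_exp) simp
  also have "\<dots> = exp (K - B * (X^2 + 1) + 2 * B^2 * X^2)"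
    by (simp add: exp_add[symmetric] power_mult_distrib)
  also have "\<dots> \<le> exp (c * ln (real s) - c * X^2 / real s)"
  proof -
    have lnu: "ln u \<le> ln (real s) + 1 / real s"
    proof -
      have "ln u = ln (real s) + ln (1 + 1 / real s)"
      proof -
        have "1 + 1 / real s = u / real s" unfolding u_def using s0 by (simp add: field_simps)
        then show ?thesis using s0 unfolding u_def by (simp add: ln_div)
      qed
      also have "ln (1 + 1 / real s) \<le> 1 / real s" by (rule ln_add_one_self_le_self) simp
      finally show ?thesis by simp
    qed
    have "K \<le> c * ln (real s) + c / real s"
      unfolding K_def using mult_left_mono[OF lnu c(1)] by (simp add: algebra_simps)
    moreover have "c / real s - B * (X^2 + 1) + 2 * B^2 * X^2 \<le> - c * X^2 / real s"
    proof -
      have "c / real s - B * (X^2 + 1) + 2 * B^2 * X^2 + c * X^2 / real s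
          = (c / real s - B) + X^2 * (c / real s - B + 2 * B^2)"
        by (simp add: algebra_simps)
      also have "\<dots> \<le> 0" using E1 E2 by (simp add: mult_nonneg_nonpos add_nonpos_nonpos)
      finally show ?thesis by simp
    qed
    ultimately show ?thesis by simp
  qed
  also have "\<dots> = hh c s x" using s unfolding X_def by (simp add: hh_exp)
  finally show ?thesis .
qed

definition Err :: "real \<Rightarrow> real \<Rightarrow> nat \<Rightarrow> int \<Rightarrow> real" where
  "Err lam b s x = lam / (real s)^2 + 4 * (lam + b)^4 * (real_of_int x)^4 / (real s)^4"

lemma lower_bridge:
  fixes b lam Lr :: real and s :: nat
  assumes b: "b > 0" and lam: "lam = b + 2*b^2" and s: "s \<ge> 1"
    and thr: "real s + 1 \<ge> (4*lam*b + 2*lam^2) / (b + 4*b^2 + 8*b^3)"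
    and Lr: "Lr > 0"
  shows "((Lr - real_of_int x) * (wt lam (Suc s) (x+1) * hh b (Suc s) (x+1))
          + (Lr + real_of_int x) * (wt lam (Suc s) (x-1) * hh b (Suc s) (x-1))) / (2 * Lr)
         \<ge> hh b s x * (1 - Err lam b s x)"
proof -
  define u where "u = real s + 1"
  define B where "B = (lam + b * u) / u^2"
  define X where "X = real_of_int x"
  define K where "K = b * ln u"
  define y where "y = 2 * B * X"
  define A where "A = exp (K - B * (X^2 + 1))"
  have s0: "real s > 0" using s by simp
  have s1: "real s \<ge> 1" using s by simp
  have u: "u = real s + 1" by (simp add: u_def)
  have lam0: "lam \<ge> 0" using lam b by simp
  have B0: "B \<ge> 0" unfolding B_def u_def using b lam0 by simp
  have Ble: "B \<le> (lam + b) / real s"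
  proof -
    have "lam + b * u \<le> (lam + b) * u" using lam0 u s0 by (simp add: algebra_simps)
    then have "B \<le> (lam + b) * u / u^2" unfolding B_def by (intro divide_right_mono) auto
    also have "\<dots> = (lam + b) / u" using u s0 by (simp add: power2_eq_square)
    also have "\<dots> \<le> (lam + b) / real s" using u s0 lam0 b by (intro divide_left_mono) auto
    finally show ?thesis .
  qed
  have E2: "b / real s - B + 2 * B^2 \<ge> 0"
    unfolding B_def by (rule E2_pos[OF u s0 b lam]) (use thr u_def in simp)
  have terms: "wt lam (Suc s) (x+1) * hh b (Suc s) (x+1) = A * exp (- y)"
              "wt lam (Suc s) (x-1) * hh b (Suc s) (x-1) = A * exp y"
  proof -
    have t1: "wt lam (Suc s) (x+1) * hh b (Suc s) (x+1) = exp (K - B * (X + 1)^2)"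
      unfolding wh_eq K_def B_def X_def u_def by simp
    have t2: "wt lam (Suc s) (x-1) * hh b (Suc s) (x-1) = exp (K - B * (X - 1)^2)"
      unfolding wh_eq K_def B_def X_def u_def by simp
    show "wt lam (Suc s) (x+1) * hh b (Suc s) (x+1) = A * exp (- y)"
      unfolding t1 exp_split_pm(1) A_def y_def ..
    show "wt lam (Suc s) (x-1) * hh b (Suc s) (x-1) = A * exp y"
      unfolding t2 exp_split_pm(2) A_def y_def ..
  qed
  have A0: "A \<ge> 0" unfolding A_def by simp
  have LHS: "((Lr - X) * (A * exp (- y)) + (Lr + X) * (A * exp y)) / (2 * Lr)
      \<ge> A * ((exp y + exp (- y)) / 2)"
  proof -
    have sgn: "X * (exp y - exp (- y)) \<ge> 0"
    proof (cases "X \<ge> 0")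
      case True
      then have "y \<ge> 0" unfolding y_def using B0 by simp
      then have "exp y \<ge> exp (- y)" by simp
      then show ?thesis using True by simp
    next
      case False
      then have "y \<le> 0" unfolding y_def using B0 by (simp add: mult_nonneg_nonpos)
      then have "exp y \<le> exp (- y)" by simp
      then show ?thesis using False by (simp add: mult_nonpos_nonpos)
    qed
    have "((Lr - X) * (A * exp (- y)) + (Lr + X) * (A * exp y)) / (2 * Lr)
        = A * ((exp y + exp (- y)) / 2) + A * (X * (exp y - exp (- y))) / (2 * Lr)"
      using Lr by (simp add: field_simps)
    also have "\<dots> \<ge> A * ((exp y + exp (- y)) / 2)"
      using A0 sgn Lr by simp
    finally show ?thesis .
  qed
  have Errge: "Err lam b s x \<ge> y^4 / 4"
  proof -
    have "y^4 / 4 = 4 * B^4 * X^4" unfolding y_def by (simp add: power_mult_distrib)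
    also have "\<dots> \<le> 4 * ((lam + b) / real s)^4 * X^4"
      using B0 Ble by (intro mult_right_mono mult_left_mono power_mono) auto
    also have "\<dots> \<le> Err lam b s x" unfolding Err_def X_def using lam0
      by (simp add: power_divide)
    finally show ?thesis .
  qed
  have hh0: "hh b s x \<ge> 0" unfolding hh_def by simp
  show ?thesis
  proof (cases "y^2 \<le> 2")
    case False
    then have "y^4 / 4 > 1"
    proof -
      have "y^4 = (y^2)^2" by (simp add: power_mult[symmetric])
      moreover have "(y^2)^2 > 2^2" using False by (intro power_strict_mono) auto
      ultimately show ?thesis by simp
    qed
    then have "1 - Err lam b s x \<le> 0" using Errge by simp
    then have "hh b s x * (1 - Err lam b s x) \<le> 0" using hh0 by (simp add: mult_nonneg_nonpos)
    moreover have "A * ((exp y + exp (- y)) / 2) \<ge> 0" using A0 by simp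
    ultimately show ?thesis using LHS unfolding terms X_def[symmetric] by linarith
  next
    case True
    have lnu: "ln u \<ge> ln (real s) + 1 / u"
    proof -
      have "ln (real s / u) \<le> real s / u - 1" using s0 u by (intro ln_le_minus_one) simp
      moreover have "ln (real s / u) = ln (real s) - ln u" using s0 u by (simp add: ln_div)
      moreover have "real s / u - 1 = - (1 / u)" using u by (simp add: field_simps)
      ultimately show ?thesis by simp
    qed
    have Kge: "K \<ge> b * ln (real s) + b / u"
      unfolding K_def using mult_left_mono[OF lnu, of b] b by (simp add: algebra_simps)
    have c1: "(exp y + exp (- y)) / 2 \<ge> exp (y^2 / 2 - y^4 / 4)" by (rule cosh_lower_exp[OF True])
    have "A * ((exp y + exp (- y)) / 2) \<ge> A * exp (y^2 / 2 - y^4 / 4)"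
      using c1 A0 by (rule mult_left_mono)
    also have "A * exp (y^2 / 2 - y^4 / 4) = exp (K - B * (X^2 + 1) + y^2 / 2 - y^4 / 4)"
      unfolding A_def by (simp add: exp_add[symmetric])
    also have "exp (K - B * (X^2 + 1) + y^2 / 2 - y^4 / 4)
        \<ge> exp ((b * ln (real s) - b * X^2 / real s) - Err lam b s x)"
    proof (rule exp_mono)
      have gen: "b / v - (lam + b * v) / v^2 = - lam / v^2" if "v > 0" for v :: real
        using that by (simp add: field_simps power2_eq_square)
      have bu: "b / u - B = - lam / u^2"
        unfolding B_def by (rule gen) (use u s0 in simp)
      have lu: "lam / u^2 \<le> lam / (real s)^2"
        using u s0 lam0 by (intro divide_left_mono power_mono) auto
      have y2: "y^2 / 2 = 2 * B^2 * X^2" unfolding y_def by (simp add: power_mult_distrib)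
      have "K - B * (X^2 + 1) + y^2 / 2 - y^4 / 4
          \<ge> b * ln (real s) + (b / u - B) + X^2 * (b / real s - B + 2 * B^2) - b * X^2 / real s - y^4 / 4"
        using Kge y2 by (simp add: algebra_simps)
      also have "X^2 * (b / real s - B + 2 * B^2) \<ge> 0" using E2 by simp
      then have "b * ln (real s) + (b / u - B) + X^2 * (b / real s - B + 2 * B^2) - b * X^2 / real s - y^4 / 4
          \<ge> b * ln (real s) - lam / (real s)^2 - b * X^2 / real s - y^4 / 4"
        using bu lu by linarith
      also have "b * ln (real s) - lam / (real s)^2 - b * X^2 / real s - y^4 / 4
          \<ge> (b * ln (real s) - b * X^2 / real s) - Err lam b s x"
      proof -
        have "Err lam b s x = lam / (real s)^2 + 4 * (lam + b)^4 * X^4 / (real s)^4"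
          unfolding Err_def X_def ..
        moreover have "y^4 / 4 \<le> 4 * (lam + b)^4 * X^4 / (real s)^4"
        proof -
          have "y^4 / 4 = 4 * B^4 * X^4" unfolding y_def by (simp add: power_mult_distrib)
          also have "\<dots> \<le> 4 * ((lam + b) / real s)^4 * X^4"
            using B0 Ble by (intro mult_right_mono mult_left_mono power_mono) auto
          finally show ?thesis by (simp add: power_divide)
        qed
        ultimately show ?thesis by linarith
      qed
      finally show "(b * ln (real s) - b * X^2 / real s) - Err lam b s x \<le> K - B * (X^2 + 1) + y^2 / 2 - y^4 / 4" .
    qed
    also have "exp ((b * ln (real s) - b * X^2 / real s) - Err lam b s x)
        = hh b s x * exp (- Err lam b s x)"
      using s unfolding X_def by (simp add: hh_exp mult_exp_exp)
    also have "\<dots> \<ge> hh b s x * (1 - Err lam b s x)"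
      using hh0 exp_ge_add_one_self[of "- Err lam b s x"] by (intro mult_left_mono) auto
    finally have "A * ((exp y + exp (- y)) / 2) \<ge> hh b s x * (1 - Err lam b s x)" .
    then show ?thesis using LHS unfolding terms X_def[symmetric] by linarith
  qed
qed

lemma Kst_scale: "Kst w s (\<lambda>y. a * F y) x = a * Kst w s F x"
  by (simp add: Kst_def algebra_simps)

lemma Kst_diff: "Kst w s (\<lambda>y. F y - G y) x = Kst w s F x - Kst w s G x"
  unfolding Kst_def by (simp add: algebra_simps diff_divide_distrib add_divide_distrib)

lemma wt_pos: "wt lam i y > 0" by (simp add: wt_def)

lemma wt_le1: "lam \<ge> 0 \<Longrightarrow> wt lam i y \<le> 1"
  unfolding wt_def by (simp add: divide_nonneg_nonneg)

lemma Kst_q: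
  "Kst w s (\<lambda>y. q L y * g y) x = q (Suc L) x *
     (((real (Suc L) - real_of_int x) * (w (Suc s) (x+1) * g (x+1))
       + (real (Suc L) + real_of_int x) * (w (Suc s) (x-1) * g (x-1))) / (2 * real (Suc L)))"
proof -
  have p: "q L (x+1) = q (Suc L) x * (real (Suc L) - real_of_int x) / real (Suc L)"
    using q_bridge_plus[of L x] by (simp add: field_simps del: of_nat_Suc)
  have m: "q L (x-1) = q (Suc L) x * (real (Suc L) + real_of_int x) / real (Suc L)"
    using q_bridge_minus[of L x] by (simp add: field_simps del: of_nat_Suc)
  show ?thesis unfolding Kst_def p m by (simp add: field_simps del: of_nat_Suc)
qed

lemma super_q: "lam \<ge> 0 \<Longrightarrow> Kst (wt lam) s (q L) x \<le> q (Suc L) x"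
proof -
  assume l: "lam \<ge> 0"
  have "Kst (wt lam) s (q L) x \<le> (1 * q L (x+1) + 1 * q L (x-1)) / 2"
    unfolding Kst_def
    by (intro divide_right_mono add_mono mult_right_mono wt_le1 l q_nonneg) auto
  then show ?thesis by (simp add: q_Suc)
qed

lemma err_bound:
  fixes b lam d :: real and s :: nat
  assumes b: "b > 0" "lam \<ge> 0" and d: "0 < d" "d \<le> 1/2" and s: "s \<ge> 1"
  shows "hh b s x * Err lam b s x \<le> (lam + 16 * (lam + b)^4 / d^2) * (1 / (real s * sqrt (real s))) * hh (b - d) s x"
proof -
  define r where "r = real s"
  define X where "X = real_of_int x"
  define z where "z = X^2 / r"
  have r1: "r \<ge> 1" unfolding r_def using s by simp
  have z0: "z \<ge> 0" unfolding z_def using r1 by simp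
  have split: "hh b s x = r powr d * exp (- d * z) * hh (b - d) s x"
  proof -
    have p: "r powr b = r powr d * r powr (b - d)" by (simp add: powr_add[symmetric])
    have e: "- b * X^2 / r = - d * (X^2 / r) + (- (b - d) * X^2 / r)"
      by (simp add: diff_divide_distrib add_divide_distrib algebra_simps)
    show ?thesis unfolding hh_def r_def[symmetric] X_def[symmetric] z_def p e exp_add by (simp add: algebra_simps)
  qed
  have Errz: "Err lam b s x = (lam + 4 * (lam + b)^4 * z^2) / r^2"
    unfolding Err_def r_def[symmetric] X_def[symmetric] z_def using r1
    by (simp add: power_divide field_simps power2_eq_square power4_eq_xxxx)
  have zb: "z^2 * exp (- d * z) \<le> 4 / d^2"
  proof -
    have "exp (d * z) \<ge> (d * z)^2 / 4" using exp_ge_sq4[of "d * z"] d z0 by simp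
    then have "z^2 * d^2 \<le> 4 * exp (d * z)" by (simp add: power_mult_distrib field_simps)
    then have "z^2 \<le> 4 / d^2 * exp (d * z)" using d by (simp add: field_simps)
    then have "z^2 * exp (- d * z) \<le> 4 / d^2 * exp (d * z) * exp (- d * z)"
      by (intro mult_right_mono) auto
    also have "\<dots> = 4 / d^2" by (simp add: mult.assoc mult_exp_exp)
    finally show ?thesis .
  qed
  have e1: "exp (- d * z) \<le> 1" using d z0 by simp
  have "exp (- d * z) * (lam + 4 * (lam + b)^4 * z^2) = lam * exp (- d * z) + 4 * (lam + b)^4 * (z^2 * exp (- d * z))"
    by (simp add: algebra_simps)
  also have "\<dots> \<le> lam * 1 + 4 * (lam + b)^4 * (4 / d^2)"
    using e1 zb b by (intro add_mono mult_left_mono) auto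
  finally have core: "exp (- d * z) * (lam + 4 * (lam + b)^4 * z^2) \<le> lam + 16 * (lam + b)^4 / d^2"
    by simp
  have rp: "r powr d / r^2 \<le> 1 / (r * sqrt r)"
  proof -
    have "r powr d \<le> r powr (1/2)" using r1 d by (intro powr_mono) auto
    also have "\<dots> = sqrt r" using r1 by (simp add: powr_half_sqrt)
    finally have "r powr d / r^2 \<le> sqrt r / r^2" by (intro divide_right_mono) auto
    also have "sqrt r / r^2 = 1 / (r * sqrt r)"
    proof -
      have "sqrt r * sqrt r = r" using r1 by simp
      then show ?thesis using r1 by (simp add: field_simps power2_eq_square)
    qed
    finally show ?thesis .
  qed
  have hd0: "hh (b - d) s x \<ge> 0" unfolding hh_def by simp
  have "hh b s x * Err lam b s x = (r powr d / r^2) * (exp (- d * z) * (lam + 4 * (lam + b)^4 * z^2)) * hh (b - d) s x"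
    unfolding split Errz by (simp add: field_simps)
  also have "\<dots> \<le> (1 / (r * sqrt r)) * (lam + 16 * (lam + b)^4 / d^2) * hh (b - d) s x"
    using rp core hd0 r1 b by (intro mult_right_mono mult_mono) auto
  finally show ?thesis unfolding r_def by (simp add: algebra_simps)
qed

lemma exp_convex2:
  fixes p p' a Y1 Y2 :: real
  assumes "p \<ge> 0" "p' \<ge> 0" "p + p' = 1"
  shows "p * exp (- a * Y1) + p' * exp (- a * Y2) \<ge> exp (- a * (p * Y1 + p' * Y2))"
proof -
  define M where "M = p * Y1 + p' * Y2"
  have g: "exp (- a * Y) \<ge> exp (- a * M) * (1 - a * (Y - M))" for Y
  proof -
    have "exp (- a * Y) = exp (- a * M) * exp (- a * (Y - M))"
      by (simp add: mult_exp_exp algebra_simps)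
    moreover have "exp (- a * (Y - M)) \<ge> 1 - a * (Y - M)"
      using exp_ge_add_one_self[of "- a * (Y - M)"] by simp
    ultimately show ?thesis by (simp add: mult_left_mono)
  qed
  have "p * exp (- a * Y1) + p' * exp (- a * Y2) \<ge> p * (exp (- a * M) * (1 - a * (Y1 - M))) + p' * (exp (- a * M) * (1 - a * (Y2 - M)))"
    using g assms by (intro add_mono mult_left_mono) auto
  also have "p * (exp (- a * M) * (1 - a * (Y1 - M))) + p' * (exp (- a * M) * (1 - a * (Y2 - M)))
      = exp (- a * M) * ((p + p') - a * (p * Y1 + p' * Y2 - (p + p') * M))"
    by (simp add: algebra_simps)
  also have "\<dots> = exp (- a * M)" using assms(3) unfolding M_def by simp
  finally show ?thesis unfolding M_def .
qed

definition mm :: "nat \<Rightarrow> int \<Rightarrow> real" where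
  "mm L x = real L * (real_of_int x)^2 + real L * (real L + 1) / 2"

lemma jensen_step:
  fixes lam a :: real and T s L :: nat
  assumes lam: "lam \<ge> 0" and T: "T \<ge> 1" "T \<le> s" and a: "a = lam / (real T)^2"
  shows "q (Suc L) x * exp (- a * mm (Suc L) x) \<le> Kst (wt lam) s (\<lambda>y. q L y * exp (- a * mm L y)) x"
proof -
  define L' where "L' = real (Suc L)"
  define X where "X = real_of_int x"
  have L'pos: "L' > 0" unfolding L'_def by simp
  have a0: "a \<ge> 0" unfolding a using lam by simp
  have K: "Kst (wt lam) s (\<lambda>y. q L y * exp (- a * mm L y)) x = q (Suc L) x *
     (((L' - X) * (wt lam (Suc s) (x+1) * exp (- a * mm L (x+1)))
       + (L' + X) * (wt lam (Suc s) (x-1) * exp (- a * mm L (x-1)))) / (2 * L'))"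
    unfolding L'_def X_def by (rule Kst_q)
  show ?thesis
  proof (cases rule: q_cases[of "Suc L" x])
    case 1
    then show ?thesis unfolding K by simp
  next
    case (2 k)
    have Xb: "X \<le> L'" "- L' \<le> X" unfolding X_def L'_def using 2 by auto
    define p where "p = (L' - X) / (2 * L')"
    define p' where "p' = (L' + X) / (2 * L')"
    have p0: "p \<ge> 0" "p' \<ge> 0" "p + p' = 1" unfolding p_def p'_def using Xb L'pos
      by (auto simp: field_simps)
    define Y1 where "Y1 = (X + 1)^2 + mm L (x+1)"
    define Y2 where "Y2 = (X - 1)^2 + mm L (x-1)"
    have wge: "wt lam (Suc s) y \<ge> exp (- a * (real_of_int y)^2)" for y
    proof -
      have "real T \<le> real (Suc s)" using T by simp
      then have "(real T)^2 \<le> (real (Suc s))^2" using T by (intro power_mono) auto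
      then have "lam / (real (Suc s))^2 \<le> lam / (real T)^2"
        using T lam by (intro divide_left_mono) auto
      then have "lam / (real (Suc s))^2 * (real_of_int y)^2 \<le> a * (real_of_int y)^2"
        unfolding a by (intro mult_right_mono) auto
      then show ?thesis unfolding wt_def by simp
    qed
    have t1: "wt lam (Suc s) (x+1) * exp (- a * mm L (x+1)) \<ge> exp (- a * Y1)"
    proof -
      have "wt lam (Suc s) (x+1) * exp (- a * mm L (x+1)) \<ge> exp (- a * (X+1)^2) * exp (- a * mm L (x+1))"
        using wge[of "x+1"] unfolding X_def by (intro mult_right_mono) auto
      then show ?thesis unfolding Y1_def by (simp add: mult_exp_exp algebra_simps)
    qed
    have t2: "wt lam (Suc s) (x-1) * exp (- a * mm L (x-1)) \<ge> exp (- a * Y2)"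
    proof -
      have "wt lam (Suc s) (x-1) * exp (- a * mm L (x-1)) \<ge> exp (- a * (X-1)^2) * exp (- a * mm L (x-1))"
        using wge[of "x-1"] unfolding X_def by (intro mult_right_mono) auto
      then show ?thesis unfolding Y2_def by (simp add: mult_exp_exp algebra_simps)
    qed
    have brk: "((L' - X) * (wt lam (Suc s) (x+1) * exp (- a * mm L (x+1)))
       + (L' + X) * (wt lam (Suc s) (x-1) * exp (- a * mm L (x-1)))) / (2 * L')
       = p * (wt lam (Suc s) (x+1) * exp (- a * mm L (x+1))) + p' * (wt lam (Suc s) (x-1) * exp (- a * mm L (x-1)))"
      unfolding p_def p'_def using L'pos by (simp add: field_simps)
    have "p * (wt lam (Suc s) (x+1) * exp (- a * mm L (x+1))) + p' * (wt lam (Suc s) (x-1) * exp (- a * mm L (x-1)))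
        \<ge> p * exp (- a * Y1) + p' * exp (- a * Y2)"
      using t1 t2 p0 by (intro add_mono mult_left_mono) auto
    also have "p * exp (- a * Y1) + p' * exp (- a * Y2) \<ge> exp (- a * (p * Y1 + p' * Y2))"
      by (rule exp_convex2[OF p0])
    also have "exp (- a * (p * Y1 + p' * Y2)) \<ge> exp (- a * mm (Suc L) x)"
    proof -
      have mean: "p * Y1 + p' * Y2 = L' * X^2 - 2 * X^2 + L' * (L' + 1) / 2"
      proof -
        have m1: "mm L (x+1) = (L' - 1) * (X+1)^2 + (L' - 1) * L' / 2"
          unfolding mm_def L'_def X_def by simp
        have m2: "mm L (x-1) = (L' - 1) * (X-1)^2 + (L' - 1) * L' / 2"
          unfolding mm_def L'_def X_def by simp
        have "p * Y1 + p' * Y2 = L' * (p * (X+1)^2 + p' * (X-1)^2) + (p + p') * ((L' - 1) * L' / 2)"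
          unfolding Y1_def Y2_def m1 m2 by (simp add: field_simps)
        also have "p * (X+1)^2 + p' * (X-1)^2 = X^2 + 1 - 2 * X^2 / L'"
          unfolding p_def p'_def using L'pos by (simp add: field_simps power2_eq_square)
        also have "L' * (X^2 + 1 - 2 * X^2 / L') + (p + p') * ((L' - 1) * L' / 2) = L' * (X^2 + 1 - 2 * X^2 / L') + (L' - 1) * L' / 2"
          using p0(3) by simp
        also have "\<dots> = L' * X^2 - 2 * X^2 + L' * (L' + 1) / 2"
          using L'pos by (simp add: field_simps power2_eq_square)
        finally show ?thesis .
      qed
      have "p * Y1 + p' * Y2 \<le> mm (Suc L) x"
        unfolding mean mm_def L'_def[symmetric] X_def[symmetric] by simp
      then show ?thesis using a0 by (simp add: mult_left_mono)
    qed
    finally have "exp (- a * mm (Suc L) x) \<le> ((L' - X) * (wt lam (Suc s) (x+1) * exp (- a * mm L (x+1)))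
       + (L' + X) * (wt lam (Suc s) (x-1) * exp (- a * mm L (x-1)))) / (2 * L')"
      unfolding brk .
    then show ?thesis unfolding K using q_nonneg[of "Suc L" x] by (rule mult_left_mono)
  qed
qed

lemma jensen:
  fixes lam a :: real and T s Nn :: nat
  assumes lam: "lam \<ge> 0" and T: "T \<ge> 1" "T \<le> s" "s \<le> Nn" and a: "a = lam / (real T)^2"
  shows "q (Nn - s) x * exp (- a * mm (Nn - s) x) \<le> Kp (wt lam) del s (Nn - s) x"
proof (rule Kp_sub[where f = "\<lambda>j x. q (Nn - j) x * exp (- a * mm (Nn - j) x)"])
  show "\<And>i y. wt lam i y \<ge> 0" using wt_pos less_imp_le by blast
next
  fix j x assume j: "j < Nn - s"
  have e: "Nn - (s + j) = Suc (Nn - (s + j + 1))" using j by simp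
  show "q (Nn - (s + j)) x * exp (- a * mm (Nn - (s + j)) x)
      \<le> Kst (wt lam) (s + j) (\<lambda>x. q (Nn - (s + j + 1)) x * exp (- a * mm (Nn - (s + j + 1)) x)) x"
    unfolding e by (rule jensen_step[OF lam T(1) _ a]) (use T in simp)
next
  fix x show "q (Nn - (s + (Nn - s))) x * exp (- a * mm (Nn - (s + (Nn - s))) x) \<le> del x"
    using T by (simp add: q_0 mm_def)
qed

lemma upper_q:
  fixes lam :: real and s Nn :: nat
  assumes lam: "lam \<ge> 0" and s: "s \<le> Nn"
  shows "Kp (wt lam) del s (Nn - s) x \<le> q (Nn - s) x"
proof (rule Kp_super[where f = "\<lambda>j x. q (Nn - j) x"])
  show "\<And>i y. wt lam i y \<ge> 0" using wt_pos less_imp_le by blast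
next
  fix j x assume j: "j < Nn - s"
  have e: "Nn - (s + j) = Suc (Nn - (s + j + 1))" using j by simp
  show "Kst (wt lam) (s + j) (q (Nn - (s + j + 1))) x \<le> q (Nn - (s + j)) x"
    unfolding e by (rule super_q[OF lam])
next
  fix x show "del x \<le> q (Nn - (s + (Nn - s))) x" using s by (simp add: q_0)
qed

definition thrA :: "real \<Rightarrow> real \<Rightarrow> real" where
  "thrA c lam = (lam + 4*lam*c + 2*lam^2) / (lam - c - 2*c^2)"

definition thrB :: "real \<Rightarrow> real \<Rightarrow> real" where
  "thrB b lam = (4*lam*b + 2*lam^2) / (b + 4*b^2 + 8*b^3)"

lemma hh_zero: "s \<ge> 1 \<Longrightarrow> hh c s 0 = real s powr c"
  unfolding hh_def by simp

lemma hh_nonneg: "hh c s x \<ge> 0" unfolding hh_def by simp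

lemma upper_main:
  fixes c lam :: real and t0 T Nn l :: nat
  assumes c: "c \<ge> 0" "lam \<ge> 0" "lam - c - 2*c^2 > 0"
    and t: "1 \<le> t0" "t0 \<le> T" "T \<le> Nn" and l: "Nn - T = 2 * l" "l \<ge> 1"
    and cl: "8 * real l * c \<le> real T"
    and thr: "real t0 + 1 \<ge> thrA c lam"
  shows "Kp (wt lam) del t0 (Nn - t0) 0 \<le> q (2*l) 0 * (real t0 / real T) powr c"
proof -
  define Q where "Q = q (2*l) 0"
  define C where "C = Q / real T powr c"
  have T0: "real T > 0" using t by simp
  have Q0: "Q \<ge> 0" unfolding Q_def by (rule q_nonneg)
  have split: "Kp (wt lam) del t0 (Nn - t0) 0 = Kp (wt lam) (Kp (wt lam) del T (Nn - T)) t0 (T - t0) 0"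
    using Kp_add[of "wt lam" del t0 "T - t0" "Nn - T"] t by simp
  have ter: "Kp (wt lam) del T (Nn - T) x \<le> C * hh c T x" for x
  proof -
    define X where "X = real_of_int x"
    have "Kp (wt lam) del T (Nn - T) x \<le> q (Nn - T) x" by (rule upper_q[OF c(2) t(3)])
    also have "\<dots> = q (2*l) x" using l by simp
    also have "\<dots> \<le> Q * exp (- (X^2) / (8 * real l))" unfolding Q_def X_def by (rule q_gauss[OF l(2)])
    also have "\<dots> \<le> Q * exp (- c * X^2 / real T)"
    proof -
      have "c * X^2 / real T \<le> X^2 / (8 * real l)"
      proof -
        have "(8 * real l * c) * X^2 \<le> real T * X^2"
          using cl by (intro mult_right_mono) auto
        then have "c * X^2 * (8 * real l) \<le> X^2 * real T" by (simp add: algebra_simps)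
        then show ?thesis using T0 l by (simp add: field_simps)
      qed
      then show ?thesis using Q0 by (intro mult_left_mono) auto
    qed
    also have "\<dots> = C * hh c T x"
      unfolding C_def hh_def X_def using T0 by simp
    finally show ?thesis .
  qed
  have "Kp (wt lam) (Kp (wt lam) del T (Nn - T)) t0 (T - t0) 0 \<le> C * hh c t0 0"
  proof (rule Kp_super[where f = "\<lambda>j x. C * hh c j x"])
    show "\<And>i y. wt lam i y \<ge> 0" using wt_pos less_imp_le by blast
  next
    fix j x assume j: "j < T - t0"
    have s1: "t0 + j \<ge> 1" using t by simp
    have th: "real (t0 + j) + 1 \<ge> (lam + 4*lam*c + 2*lam^2) / (lam - c - 2*c^2)"
      using thr unfolding thrA_def by simp
    have "Kst (wt lam) (t0 + j) (hh c (Suc (t0 + j))) x \<le> hh c (t0 + j) x"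
      by (rule super_h[OF c(1) c(2) c(3) s1 th])
    moreover have "C \<ge> 0" unfolding C_def using Q0 by simp
    ultimately show "Kst (wt lam) (t0 + j) (\<lambda>x. C * hh c (t0 + j + 1) x) x \<le> C * hh c (t0 + j) x"
      by (simp add: Kst_scale mult_left_mono)
  next
    fix x show "Kp (wt lam) del T (Nn - T) x \<le> C * hh c (t0 + (T - t0)) x"
      using ter t by simp
  qed
  also have "C * hh c t0 0 = Q * (real t0 / real T) powr c"
    unfolding C_def using t by (simp add: hh_zero powr_divide)
  finally show ?thesis unfolding split Q_def .
qed

lemma lower_main:
  fixes b lam d Q :: real and t0 T Nn :: nat
  assumes b: "b > 0" "lam = b + 2*b^2" and d: "0 < d" "d \<le> 1/2" "d < b"
    and t: "1 \<le> t0" "t0 \<le> T" "T \<le> Nn"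
    and thr: "real t0 + 1 \<ge> thrA (b - d) lam" "real t0 + 1 \<ge> thrB b lam"
    and Q: "Q \<ge> 0" "\<And>s y. t0 \<le> s \<Longrightarrow> s \<le> T \<Longrightarrow> q (Nn - s) y \<le> Q"
    and LT: "lam * real (Nn - T) \<le> b * real T" "Nn - T \<le> T"
  shows "exp (- lam) * real T powr (- b) *
          (q (Nn - t0) 0 * real t0 powr b - Q * (6 * (lam + 16 * (lam + b)^4 / d^2)) * (1 / sqrt (real t0)) * real t0 powr (b - d))
         \<le> Kp (wt lam) del t0 (Nn - t0) 0"
proof -
  define Kc where "Kc = lam + 16 * (lam + b)^4 / d^2"
  define Dc where "Dc = 6 * Kc"
  define ka where "ka = exp (- lam) * real T powr (- b)"
  define f where "f j x = ka * (q (Nn - j) x * hh b j x - Q * Dc * (1 / sqrt (real j)) * hh (b - d) j x)" for j x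
  have T0: "real T \<ge> 1" using t by simp
  have lam0: "lam \<ge> 0" using b by simp
  have ka0: "ka \<ge> 0" unfolding ka_def by simp
  have Kc0: "Kc \<ge> 0" unfolding Kc_def using lam0 by simp
  have c2: "b - d \<ge> 0" "lam - (b - d) - 2 * (b - d)^2 > 0"
  proof -
    show "b - d \<ge> 0" using d by simp
    have "(b - d)^2 < b^2" using d b by (intro power_strict_mono) auto
    then show "lam - (b - d) - 2 * (b - d)^2 > 0" using b d by simp
  qed
  have split: "Kp (wt lam) del t0 (Nn - t0) 0 = Kp (wt lam) (Kp (wt lam) del T (Nn - T)) t0 (T - t0) 0"
    using Kp_add[of "wt lam" del t0 "T - t0" "Nn - T"] t by simp
  have "f t0 0 \<le> Kp (wt lam) (Kp (wt lam) del T (Nn - T)) t0 (T - t0) 0"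
  proof (rule Kp_sub[where f = f])
    show "\<And>i y. wt lam i y \<ge> 0" using wt_pos less_imp_le by blast
  next
    fix x
    define L where "L = Nn - T"
    define X where "X = real_of_int x"
    define a where "a = lam / (real T)^2"
    have "f (t0 + (T - t0)) x = f T x" using t by simp
    also have "f T x \<le> ka * (q L x * hh b T x)"
    proof -
      have "Q * Dc * (1 / sqrt (real T)) * hh (b - d) T x \<ge> 0"
        unfolding Dc_def using Q Kc0 hh_nonneg by simp
      then show ?thesis unfolding f_def L_def using ka0 by (intro mult_left_mono) auto
    qed
    also have "ka * (q L x * hh b T x) = q L x * exp (- lam - b * X^2 / real T)"
    proof -
      have pp: "real T powr (- b) * real T powr b = 1" using T0 by (simp add: powr_add[symmetric])
      have "ka * (q L x * hh b T x) = q L x * (real T powr (- b) * real T powr b) * (exp (- lam) * exp (- b * X^2 / real T))"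
        unfolding ka_def hh_def X_def by (simp add: algebra_simps)
      also have "\<dots> = q L x * exp (- lam - b * X^2 / real T)"
        unfolding pp by (simp add: mult_exp_exp)
      finally show ?thesis .
    qed
    also have "\<dots> \<le> q L x * exp (- a * mm L x)"
    proof -
      have "a * mm L x \<le> lam + b * X^2 / real T"
      proof -
        have e: "a * mm L x = (lam * real L / (real T)^2) * X^2 + lam * (real L * (real L + 1) / 2) / (real T)^2"
          unfolding a_def mm_def X_def using T0 by (simp add: field_simps)
        have e1: "lam * real L / (real T)^2 \<le> b / real T"
        proof -
          have "lam * real L / (real T)^2 \<le> b * real T / (real T)^2"
            using LT(1) unfolding L_def by (intro divide_right_mono) auto
          also have "\<dots> = b / real T" using T0 by (simp add: power2_eq_square)
          finally show ?thesis .
        qed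
        have e2: "real L * (real L + 1) / 2 \<le> (real T)^2"
        proof -
          have "real L \<le> real T" using LT(2) unfolding L_def by simp
          then have "real L * (real L + 1) \<le> real T * (real T + 1)" by (intro mult_mono) auto
          also have "\<dots> \<le> 2 * (real T)^2" using T0 by (simp add: power2_eq_square algebra_simps)
          finally show ?thesis by simp
        qed
        have "lam * (real L * (real L + 1) / 2) / (real T)^2 \<le> lam"
          using e2 lam0 T0 by (simp add: divide_le_eq mult_left_mono)
        moreover have "(lam * real L / (real T)^2) * X^2 \<le> b / real T * X^2"
          using e1 by (intro mult_right_mono) auto
        ultimately show ?thesis unfolding e by simp
      qed
      then show ?thesis using q_nonneg[of L x] by (intro mult_left_mono) auto
    qed
    also have "\<dots> \<le> Kp (wt lam) del T (Nn - T) x"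
      unfolding L_def X_def a_def
      using jensen[where lam = lam and a = "lam / (real T)^2" and T = T and s = T and Nn = Nn and x = x] lam0 t by simp
    finally show "f (t0 + (T - t0)) x \<le> Kp (wt lam) del T (Nn - T) x" .
  next
    fix j x assume j: "j < T - t0"
    define s where "s = t0 + j"
    define L where "L = Nn - (s + 1)"
    have sT: "s < T" "t0 \<le> s" using j unfolding s_def by auto
    have s1: "s \<ge> 1" using sT t by simp
    have LL: "Nn - s = Suc L" unfolding L_def using sT t by simp
    have rs: "real s \<ge> 1" using s1 by simp
    define X where "X = real_of_int x"
    have thA: "real s + 1 \<ge> (lam + 4*lam*(b-d) + 2*lam^2) / (lam - (b-d) - 2*(b-d)^2)"
      using thr(1) sT unfolding thrA_def by simp
    have thB: "real s + 1 \<ge> (4*lam*b + 2*lam^2) / (b + 4*b^2 + 8*b^3)"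
      using thr(2) sT unfolding thrB_def by simp
    have qQ: "q (Suc L) x \<le> Q" using Q(2)[of s x] sT LL by simp
    have A: "Kst (wt lam) s (\<lambda>y. q L y * hh b (Suc s) y) x \<ge> q (Suc L) x * hh b s x - Q * (Kc * (1 / (real s * sqrt (real s))) * hh (b - d) s x)"
    proof -
      have "Kst (wt lam) s (\<lambda>y. q L y * hh b (Suc s) y) x = q (Suc L) x *
         (((real (Suc L) - X) * (wt lam (Suc s) (x+1) * hh b (Suc s) (x+1))
          + (real (Suc L) + X) * (wt lam (Suc s) (x-1) * hh b (Suc s) (x-1))) / (2 * real (Suc L)))"
        unfolding X_def by (rule Kst_q)
      also have "\<dots> \<ge> q (Suc L) x * (hh b s x * (1 - Err lam b s x))"
        unfolding X_def
        by (intro mult_left_mono lower_bridge[OF b(1) b(2) s1 thB] q_nonneg) simp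
      finally have k1: "Kst (wt lam) s (\<lambda>y. q L y * hh b (Suc s) y) x \<ge> q (Suc L) x * (hh b s x * (1 - Err lam b s x))" .
      have E0: "hh b s x * Err lam b s x \<ge> 0" unfolding Err_def using hh_nonneg lam0 by simp
      have "q (Suc L) x * (hh b s x * (1 - Err lam b s x)) = q (Suc L) x * hh b s x - q (Suc L) x * (hh b s x * Err lam b s x)"
        by (simp add: algebra_simps)
      also have "\<dots> \<ge> q (Suc L) x * hh b s x - Q * (hh b s x * Err lam b s x)"
        using qQ E0 by (simp add: mult_right_mono)
      finally have k2: "q (Suc L) x * (hh b s x * (1 - Err lam b s x)) \<ge> q (Suc L) x * hh b s x - Q * (hh b s x * Err lam b s x)" .
      have k3: "Q * (hh b s x * Err lam b s x) \<le> Q * (Kc * (1 / (real s * sqrt (real s))) * hh (b - d) s x)"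
        unfolding Kc_def using Q(1) by (intro mult_left_mono err_bound b(1) lam0 d(1) d(2) s1)
      show ?thesis using k1 k2 k3 by linarith
    qed
    have B: "Kst (wt lam) s (hh (b - d) (Suc s)) x \<le> hh (b - d) s x"
      by (rule super_h[OF c2(1) lam0 c2(2) s1 thA])
    have psi: "Kc / (real s * sqrt (real s)) + Dc * (1 / sqrt (real (Suc s))) \<le> Dc * (1 / sqrt (real s))"
    proof -
      have "1 / sqrt (real s) - 1 / sqrt (real s + 1) \<ge> 1 / (6 * (real s * sqrt (real s)))"
        by (rule inv_sqrt_diff[OF rs])
      then have "Dc * (1 / (6 * (real s * sqrt (real s)))) \<le> Dc * (1 / sqrt (real s) - 1 / sqrt (real s + 1))"
        unfolding Dc_def using Kc0 by (intro mult_left_mono) auto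
      then show ?thesis unfolding Dc_def by (simp add: algebra_simps)
    qed
    have hbd0: "hh (b - d) s x \<ge> 0" by (rule hh_nonneg)
    have "Kst (wt lam) s (f (Suc s)) x = ka * (Kst (wt lam) s (\<lambda>y. q L y * hh b (Suc s) y) x
        - Q * Dc * (1 / sqrt (real (Suc s))) * Kst (wt lam) s (hh (b - d) (Suc s)) x)"
    proof -
      define c0 where "c0 = Q * Dc * (1 / sqrt (real (Suc s)))"
      have fe: "f (Suc s) = (\<lambda>y. ka * ((\<lambda>y. q L y * hh b (Suc s) y) y - (\<lambda>y. c0 * hh (b - d) (Suc s) y) y))"
        by (rule ext) (simp add: f_def L_def c0_def)
      show ?thesis unfolding fe Kst_scale Kst_diff Kst_scale c0_def ..
    qed
    also have "\<dots> \<ge> ka * ((q (Suc L) x * hh b s x - Q * (Kc * (1 / (real s * sqrt (real s))) * hh (b - d) s x))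
        - Q * Dc * (1 / sqrt (real (Suc s))) * hh (b - d) s x)"
      using A B ka0 Q(1) Kc0 unfolding Dc_def
      by (intro mult_left_mono diff_mono mult_left_mono) auto
    also have "ka * ((q (Suc L) x * hh b s x - Q * (Kc * (1 / (real s * sqrt (real s))) * hh (b - d) s x))
        - Q * Dc * (1 / sqrt (real (Suc s))) * hh (b - d) s x)
        = ka * (q (Suc L) x * hh b s x - Q * hh (b - d) s x * (Kc / (real s * sqrt (real s)) + Dc * (1 / sqrt (real (Suc s)))))"
      by (simp add: algebra_simps)
    also have "\<dots> \<ge> ka * (q (Suc L) x * hh b s x - Q * hh (b - d) s x * (Dc * (1 / sqrt (real s))))"
    proof -
      have bb: "Q * hh (b - d) s x * (Kc / (real s * sqrt (real s)) + Dc * (1 / sqrt (real (Suc s)))) \<le> Q * hh (b - d) s x * (Dc * (1 / sqrt (real s)))"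
        using psi Q(1) hbd0 by (intro mult_left_mono) auto
      then show ?thesis using ka0 by (intro mult_left_mono) auto
    qed
    also have "ka * (q (Suc L) x * hh b s x - Q * hh (b - d) s x * (Dc * (1 / sqrt (real s)))) = f s x"
      unfolding f_def LL[symmetric] by (simp add: algebra_simps)
    finally show "f (t0 + j) x \<le> Kst (wt lam) (t0 + j) (f (t0 + j + 1)) x" unfolding s_def by simp
  qed
  moreover have "f t0 0 = exp (- lam) * real T powr (- b) *
          (q (Nn - t0) 0 * real t0 powr b - Q * (6 * (lam + 16 * (lam + b)^4 / d^2)) * (1 / sqrt (real t0)) * real t0 powr (b - d))"
    unfolding f_def ka_def Dc_def Kc_def using t by (simp add: hh_zero)
  ultimately show ?thesis unfolding split by simp
qed

lemma Kp_one_q: "Kp one del s k x = q k x"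
  unfolding q_def by (rule Kp_one_shift)

locale setup_n =
  fixes b :: real and n K0 :: nat
  assumes b: "b > 0" and K0: "real K0 \<ge> 12 * b + 4" and n: "n \<ge> 2 * K0"
    and A2: "Apar n \<ge> 2" and Al: "Apar n + n div K0 \<le> n"
begin

abbreviation "lam \<equiv> b + 2 * b^2"
abbreviation "t0 \<equiv> 2 * Apar n - 2"
abbreviation "N \<equiv> 2 * n - 2"
abbreviation "l \<equiv> n div K0"
abbreviation "T \<equiv> N - 2 * l"
abbreviation "m \<equiv> n - Apar n"

lemma K0pos: "K0 \<ge> 4" using K0 b by simp

lemma l1: "l \<ge> 1"
  using n K0pos by (simp add: Suc_le_eq div_greater_zero_iff)

lemma l_upper: "real K0 * real l \<le> real n"
proof -
  have "K0 * (n div K0) \<le> n" by simp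
  then show ?thesis by (metis of_nat_le_iff of_nat_mult)
qed

lemma l_lower: "real n \<le> 2 * real K0 * real l"
proof -
  have "n mod K0 < K0" using K0pos by simp
  moreover have "n = K0 * l + n mod K0" by simp
  ultimately have "n < K0 * l + K0" by linarith
  then have "real n < real (K0 * l + K0)" by (simp only: of_nat_less_iff)
  then have "real n \<le> real K0 * real l + real K0" by simp
  moreover have "real K0 * 1 \<le> real K0 * real l" using l1 by (intro mult_left_mono) auto
  ultimately show ?thesis by simp
qed

lemma Rl: "(12 * b + 2) * real l \<le> real n"
proof -
  have "(12 * b + 2) * real l \<le> real K0 * real l" using K0 by (intro mult_right_mono) auto
  then show ?thesis using l_upper by simp
qed

lemma T_ge: "real T \<ge> real n" and T_le: "real T \<le> 2 * real n"
proof -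
  have "real l \<le> real n / 4"
  proof -
    have "4 * real l \<le> real K0 * real l" using K0pos by (intro mult_right_mono) auto
    then show ?thesis using l_upper by simp
  qed
  moreover have "2 * l \<le> 2 * n - 2"
    using Al A2 by simp
  moreover have "real n \<ge> 8" using n K0pos by simp
  ultimately show "real T \<ge> real n" and "real T \<le> 2 * real n"
    by (simp_all add: of_nat_diff)
qed

lemma T_pos: "real T \<ge> 1" using T_ge n K0pos by simp

lemma lT: "(12 * b + 2) * real l \<le> real T" using Rl T_ge by simp

lemma t0_le_T: "t0 \<le> T" using Al A2 by simp

lemma t0_ge: "t0 \<ge> 2" using A2 by simp

lemma NT: "N - T = 2 * l" using Al A2 by simp

lemma Nt0: "N - t0 = 2 * m" using Al A2 by simp

lemma m_ge: "l \<le> m" using Al by simp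

lemma ratio: "q (2*l) 0 \<le> sqrt (2 * real K0) * q (2*m) 0"
proof -
  define a where "a = q (2*l) 0"
  define c where "c = q (2*m) 0"
  have a0: "a \<ge> 0" and c0: "c \<ge> 0" unfolding a_def c_def by (rule q_nonneg)+
  have "a^2 * real l \<le> c^2 * real m" unfolding a_def c_def by (rule central_ratio[OF m_ge])
  also have "\<dots> \<le> c^2 * real n" by (intro mult_left_mono) auto
  also have "\<dots> \<le> c^2 * (2 * real K0 * real l)" by (intro mult_left_mono l_lower) auto
  also have "\<dots> = (c^2 * (2 * real K0)) * real l" by (simp only: mult.assoc mult.commute mult.left_commute)
  finally have h: "a^2 * real l \<le> (c^2 * (2 * real K0)) * real l" .
  have lp: "real l > 0" using l1 by simp
  have "a^2 \<le> c^2 * (2 * real K0)" using mult_right_le_imp_le[OF h lp] .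
  also have "\<dots> = (sqrt (2 * real K0) * c)^2" by (simp add: power_mult_distrib)
  finally have "a^2 \<le> (sqrt (2 * real K0) * c)^2" .
  moreover have "sqrt (2 * real K0) * c \<ge> 0" using c0 by simp
  ultimately have "a \<le> sqrt (2 * real K0) * c" by (rule power2_le_imp_le)
  then show ?thesis unfolding a_def c_def .
qed

lemma condE_eq: "condE lam n = Kp (wt lam) del t0 (N - t0) 0 / q (2*m) 0"
proof -
  have "condE lam n = Kp (wt lam) del t0 (N - t0) 0 / Kp one del t0 (N - t0) 0"
  proof (rule condE_repr)
    show "1 \<le> t0" using t0_ge by simp
    show "t0 < N"
    proof -
      have "real 1 \<le> real T" using T_pos by simp
      then have T1: "1 \<le> T" by (simp only: of_nat_le_iff)
      have "2 * Apar n - 2 \<le> 2 * n - 2 - 2 * (n div K0)" using t0_le_T .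
      then show ?thesis using T1 l1 by arith
    qed
    show "Kp one del 0 t0 0 > 0"
    proof -
      have "t0 = 2 * (Apar n - 1)" by simp
      then show ?thesis using q_pos_central[of "Apar n - 1"] by (simp add: Kp_one_q)
    qed
    show "Kp one del t0 (N - t0) 0 > 0" unfolding Kp_one_q Nt0 by (rule q_pos_central)
  qed
  then show ?thesis unfolding Kp_one_q Nt0 .
qed

end

context setup_n
begin

lemma Tge1: "T \<ge> 1"
proof -
  have "real 1 \<le> real T" using T_pos by simp
  then show ?thesis by (simp only: of_nat_le_iff)
qed

lemma T_le_N: "T \<le> N" by simp

lemma upper_n:
  assumes c: "0 \<le> c" "c < b" and thr: "real t0 + 1 \<ge> thrA c lam"
  shows "condE lam n \<le> sqrt (2 * real K0) * (real t0 / real T) powr c"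
proof -
  have kap: "lam - c - 2*c^2 > 0"
  proof -
    have "c^2 \<le> b^2" using c by (intro power_mono) auto
    then show ?thesis using c by linarith
  qed
  have lam0: "lam \<ge> 0" using b by simp
  have cl: "8 * real l * c \<le> real T"
  proof -
    have "8 * real l * c \<le> 8 * real l * b" using c by (intro mult_left_mono) auto
    also have "\<dots> \<le> (12 * b + 2) * real l" using b by (simp add: algebra_simps)
    also have "\<dots> \<le> real T" by (rule lT)
    finally show ?thesis .
  qed
  have U: "Kp (wt lam) del t0 (N - t0) 0 \<le> q (2*l) 0 * (real t0 / real T) powr c"
    by (rule upper_main[OF c(1) lam0 kap _ t0_le_T T_le_N NT l1 cl thr]) (use t0_ge in simp)
  have qm: "q (2*m) 0 > 0" by (rule q_pos_central)
  have "condE lam n \<le> q (2*l) 0 * (real t0 / real T) powr c / q (2*m) 0"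
    unfolding condE_eq using U qm by (intro divide_right_mono) auto
  also have "\<dots> \<le> sqrt (2 * real K0) * q (2*m) 0 * (real t0 / real T) powr c / q (2*m) 0"
    using ratio qm by (intro divide_right_mono mult_right_mono) auto
  also have "\<dots> = sqrt (2 * real K0) * (real t0 / real T) powr c" using qm by simp
  finally show ?thesis .
qed

definition dd :: real where "dd = min b 1 / 2"
definition Dc :: real where "Dc = 6 * (lam + 16 * (lam + b)^4 / dd^2)"

lemma dd: "0 < dd" "dd \<le> 1/2" "dd < b"
  unfolding dd_def using b by auto

lemma lower_n:
  assumes thr: "real t0 + 1 \<ge> thrA (b - dd) lam" "real t0 + 1 \<ge> thrB b lam"
    and big: "2 * sqrt (2 * real K0) * Dc \<le> real t0 powr (dd + 1/2)"
  shows "condE lam n \<ge> exp (- lam) * real T powr (- b) / 2"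
proof -
  define Q where "Q = q (2*l) 0"
  have Q0: "Q \<ge> 0" unfolding Q_def by (rule q_nonneg)
  have Qb: "q (N - s) y \<le> Q" if "t0 \<le> s" "s \<le> T" for s y
  proof -
    have e: "N - s = 2 * l + (T - s)" using that NT by simp
    have "\<And>x. q (2*l) x \<le> Q" unfolding Q_def by (rule q_max_central)
    then show ?thesis unfolding e by (rule q_bound_mono)
  qed
  have lam0: "lam \<ge> 0" using b by simp
  have LT1: "lam * real (N - T) \<le> b * real T"
  proof -
    have "lam * real (N - T) = (2 * b + 4 * b^2) * real l" unfolding NT by (simp add: algebra_simps)
    also have "\<dots> \<le> b * ((12 * b + 2) * real l)"
    proof -
      have "2 * b + 4 * b^2 \<le> b * (12 * b + 2)" by (simp add: algebra_simps power2_eq_square)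
      then have "(2 * b + 4 * b^2) * real l \<le> (b * (12 * b + 2)) * real l" by (intro mult_right_mono) auto
      then show ?thesis by (simp only: mult.assoc)
    qed
    also have "\<dots> \<le> b * real T" using lT b by (intro mult_left_mono) auto
    finally show ?thesis .
  qed
  have LT2: "N - T \<le> T"
  proof -
    have "real (2 * l) \<le> (12 * b + 2) * real l" using b by (simp add: algebra_simps)
    also have "\<dots> \<le> real T" by (rule lT)
    finally have "2 * l \<le> T" by (simp only: of_nat_le_iff)
    then show ?thesis unfolding NT .
  qed
  have t1: "1 \<le> t0" using t0_ge by simp
  have L: "exp (- lam) * real T powr (- b) *
          (q (N - t0) 0 * real t0 powr b - Q * Dc * (1 / sqrt (real t0)) * real t0 powr (b - dd))
         \<le> Kp (wt lam) del t0 (N - t0) 0"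
    unfolding Dc_def
    by (rule lower_main[OF b refl dd(1) dd(2) dd(3) t1 t0_le_T T_le_N thr Q0 Qb LT1 LT2])
  have rt: "real t0 \<ge> 1" using t0_ge by simp
  have qm: "q (2*m) 0 > 0" by (rule q_pos_central)
  have err: "Q * Dc * (1 / sqrt (real t0)) * real t0 powr (b - dd) \<le> q (2*m) 0 * real t0 powr b / 2"
  proof -
    have sq: "1 / sqrt (real t0) * real t0 powr (b - dd) = real t0 powr (b - dd - 1/2)"
      using rt by (simp add: powr_half_sqrt[symmetric] powr_diff)
    have Dc0: "Dc \<ge> 0" unfolding Dc_def using lam0 by simp
    have "Q * Dc * (1 / sqrt (real t0)) * real t0 powr (b - dd) = Q * Dc * real t0 powr (b - dd - 1/2)"
      using sq by (metis mult.assoc)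
    also have "\<dots> \<le> (sqrt (2 * real K0) * q (2*m) 0) * Dc * real t0 powr (b - dd - 1/2)"
      using ratio Dc0 unfolding Q_def by (intro mult_right_mono) auto
    also have "\<dots> = q (2*m) 0 * (sqrt (2 * real K0) * Dc) * real t0 powr (b - dd - 1/2)"
      by (simp add: algebra_simps)
    also have "\<dots> \<le> q (2*m) 0 * (real t0 powr (dd + 1/2) / 2) * real t0 powr (b - dd - 1/2)"
      using big qm by (intro mult_right_mono mult_left_mono) auto
    also have "\<dots> = q (2*m) 0 * (real t0 powr (dd + 1/2) * real t0 powr (b - dd - 1/2)) / 2"
      by simp
    also have "real t0 powr (dd + 1/2) * real t0 powr (b - dd - 1/2) = real t0 powr b"
      by (simp add: powr_add[symmetric])
    finally show ?thesis by simp
  qed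
  have "exp (- lam) * real T powr (- b) * (q (2*m) 0 * real t0 powr b / 2)
      \<le> exp (- lam) * real T powr (- b) *
          (q (N - t0) 0 * real t0 powr b - Q * Dc * (1 / sqrt (real t0)) * real t0 powr (b - dd))"
    using err unfolding Nt0 by (intro mult_left_mono) auto
  also note L
  finally have L2: "exp (- lam) * real T powr (- b) * (q (2*m) 0 * real t0 powr b / 2) \<le> Kp (wt lam) del t0 (N - t0) 0" .
  have p1: "real t0 powr b \<ge> 1" using rt b by (simp add: ge_one_powr_ge_zero)
  have "exp (- lam) * real T powr (- b) / 2 = exp (- lam) * real T powr (- b) * (q (2*m) 0 * 1 / 2) / q (2*m) 0"
    using qm by simp
  also have "\<dots> \<le> exp (- lam) * real T powr (- b) * (q (2*m) 0 * real t0 powr b / 2) / q (2*m) 0"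
    using p1 qm by (intro divide_right_mono mult_left_mono) auto
  also have "\<dots> \<le> Kp (wt lam) del t0 (N - t0) 0 / q (2*m) 0"
    using L2 qm by (intro divide_right_mono) auto
  also have "\<dots> = condE lam n" unfolding condE_eq ..
  finally show ?thesis .
qed

end

lemma lim_aux1: "((\<lambda>x::real. 1 / ln x) \<longlongrightarrow> 0) at_top" by real_asymp
lemma lim_aux2: "((\<lambda>x::real. ln (ln x) / ln x) \<longlongrightarrow> 0) at_top" by real_asymp
lemma ev_aux3: "\<forall>\<^sub>F x in at_top. (ln x)^10 \<le> (x::real) / 2" by real_asymp
lemma lim_aux4: "filterlim (\<lambda>x::real. (ln x)^10) at_top at_top" by real_asymp

lemma seq_of_real_lim: "((f::real \<Rightarrow> real) \<longlongrightarrow> 0) at_top \<Longrightarrow> ((\<lambda>n::nat. f (real n)) \<longlongrightarrow> 0) sequentially"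
  using filterlim_compose[OF _ filterlim_real_sequentially] by blast

lemma seq_of_real_ev: "eventually P (at_top :: real filter) \<Longrightarrow> eventually (\<lambda>n::nat. P (real n)) sequentially"
  using eventually_compose_filterlim[OF _ filterlim_real_sequentially] by blast

lemma Apar_large: "eventually (\<lambda>n. Apar n \<ge> M) sequentially"
proof -
  have "filterlim (\<lambda>n::nat. (ln (real n))^10) at_top sequentially"
    using filterlim_compose[OF lim_aux4 filterlim_real_sequentially] by simp
  then have "eventually (\<lambda>n. (ln (real n))^10 \<ge> real M + 1) sequentially"
    by (simp add: filterlim_at_top)
  then show ?thesis
  proof (rule eventually_mono)
    fix n assume h: "(ln (real n))^10 \<ge> real M + 1"
    then have "\<lfloor>(ln (real n))^10\<rfloor> \<ge> int M" by linarith
    then show "Apar n \<ge> M" unfolding Apar_def by linarith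
  qed
qed

lemma Apar_le: "real (Apar n) \<le> (ln (real n))^10"
proof -
  have "(ln (real n))^10 \<ge> 0" by (simp add: zero_le_even_power)
  then show ?thesis unfolding Apar_def by linarith
qed

lemma setup_n_I:
  assumes "b > 0" "real K0 \<ge> 12 * b + 4" "n \<ge> 2 * K0" "Apar n \<ge> 2" "Apar n + n div K0 \<le> n"
  shows "setup_n b n K0"
  using assms by (unfold_locales) auto

lemma ev_t0_large: "eventually (\<lambda>n. real (2 * Apar n - 2) \<ge> X) sequentially"
proof -
  have "eventually (\<lambda>n. Apar n \<ge> nat \<lceil>X\<rceil> + 2) sequentially" by (rule Apar_large)
  then show ?thesis
  proof (rule eventually_mono)
    fix n assume h: "Apar n \<ge> nat \<lceil>X\<rceil> + 2"
    then have "real (Apar n) \<ge> real (nat \<lceil>X\<rceil>) + 2" by (metis of_nat_add of_nat_le_iff of_nat_numeral)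
    moreover have "real (2 * Apar n - 2) = 2 * real (Apar n) - 2" using h by (simp add: of_nat_diff)
    moreover have "real (nat \<lceil>X\<rceil>) \<ge> X" by linarith
    moreover have "real (nat \<lceil>X\<rceil>) \<ge> 0" by simp
    ultimately show "real (2 * Apar n - 2) \<ge> X" by linarith
  qed
qed

lemma ev_base:
  assumes K0: "K0 \<ge> 4"
  shows "eventually (\<lambda>n. n \<ge> 2 * K0 \<and> Apar n \<ge> 2 \<and> Apar n + n div K0 \<le> n \<and> n \<ge> 3) sequentially"
proof -
  have e1: "eventually (\<lambda>n. n \<ge> 2 * K0 \<and> n \<ge> 3) sequentially"
    by (intro eventually_conj eventually_ge_at_top)
  have e2: "eventually (\<lambda>n. Apar n \<ge> 2) sequentially" by (rule Apar_large)
  have e3: "eventually (\<lambda>n::nat. (ln (real n))^10 \<le> real n / 2) sequentially"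
    using seq_of_real_ev[OF ev_aux3] by simp
  have e4: "eventually (\<lambda>n. Apar n + n div K0 \<le> n) sequentially"
    using e3
  proof (rule eventually_mono)
    fix n assume h: "(ln (real n))^10 \<le> real n / 2"
    have a: "real (Apar n) \<le> real n / 2" using Apar_le[of n] h by linarith
    have "4 * (n div K0) \<le> K0 * (n div K0)" using K0 by (intro mult_right_mono) auto
    also have "\<dots> \<le> n" by simp
    finally have "real (4 * (n div K0)) \<le> real n" by (simp only: of_nat_le_iff)
    then have "real (n div K0) \<le> real n / 4" by simp
    with a have "real (Apar n + n div K0) \<le> real n" by simp
    then show "Apar n + n div K0 \<le> n" by (simp only: of_nat_le_iff)
  qed
  show ?thesis using e1 e2 e4 by eventually_elim auto
qed

theorem mainTheorem12:
  fixes \<alpha> :: real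
  assumes "\<alpha> > 1"
  shows "\<exists>g :: nat \<Rightarrow> real. (g \<longlonglongrightarrow> 0) \<and>
           (\<forall>\<^sub>F n in sequentially.
              condE (\<alpha> * (\<alpha> - 1) / 2) n = real n powr (- (\<alpha> - 1) / 2 + g n))"
proof -
  define b where "b = (\<alpha> - 1) / 2"
  have b: "b > 0" unfolding b_def using assms by simp
  have lamE: "\<alpha> * (\<alpha> - 1) / 2 = b + 2 * b^2" unfolding b_def by (simp add: field_simps power2_eq_square)
  define lam where "lam = b + 2 * b^2"
  have lam0: "lam \<ge> 0" unfolding lam_def using b by simp
  define K0 where "K0 = nat \<lceil>12 * b + 4\<rceil>"
  have K0: "real K0 \<ge> 12 * b + 4" unfolding K0_def by linarith
  have K04: "K0 \<ge> 4" using K0 b by simp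
  define cE where "cE n = condE lam n" for n
  define t0 where "t0 n = 2 * Apar n - 2" for n
  define T where "T n = (2 * n - 2) - 2 * (n div K0)" for n
  define B where "B n = (n \<ge> 2 * K0 \<and> Apar n \<ge> 2 \<and> Apar n + n div K0 \<le> n \<and> n \<ge> 3)" for n
  have EB: "eventually B sequentially" unfolding B_def by (rule ev_base[OF K04])
  have SB: "setup_n b n K0" if "B n" for n
    using that unfolding B_def by (intro setup_n_I b K0) auto
  obtain n0 where "B n0" using EB eventually_happens' by (metis eventually_sequentially order_refl)
  then have S0: "setup_n b n0 K0" by (rule SB)
  define dd where "dd = setup_n.dd b"
  define Dc where "Dc = setup_n.Dc b"
  have dd: "0 < dd" "dd \<le> 1/2" "dd < b" unfolding dd_def using setup_n.dd[OF S0] by auto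
  have EL: "eventually (\<lambda>n. B n \<and> cE n \<ge> exp (- lam) * real (T n) powr (- b) / 2 \<and> real n \<le> real (T n) \<and> real (T n) \<le> 2 * real n) sequentially"
  proof -
    have e1: "eventually (\<lambda>n. real (t0 n) \<ge> max (thrA (b - dd) lam) (thrB b lam)) sequentially"
      unfolding t0_def by (rule ev_t0_large)
    have e2: "eventually (\<lambda>n. real (t0 n) \<ge> (2 * sqrt (2 * real K0) * Dc)^2 + 1) sequentially"
      unfolding t0_def by (rule ev_t0_large)
    show ?thesis using EB e1 e2
    proof eventually_elim
      case (elim n)
      interpret S: setup_n b n K0 by (rule SB[OF elim(1)])
      have th: "real (t0 n) + 1 \<ge> thrA (b - dd) lam" "real (t0 n) + 1 \<ge> thrB b lam" using elim(2) by auto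
      have big: "2 * sqrt (2 * real K0) * Dc \<le> real (t0 n) powr (dd + 1/2)"
      proof -
        have t1: "real (t0 n) \<ge> 1" using elim(3) by (smt (verit) zero_le_power2)
        have "2 * sqrt (2 * real K0) * Dc \<le> sqrt ((2 * sqrt (2 * real K0) * Dc)^2)" by simp
        also have "\<dots> \<le> sqrt (real (t0 n))"
        proof -
          have "(2 * sqrt (2 * real K0) * Dc)^2 \<le> real (t0 n)" using elim(3) by linarith
          then show ?thesis by (rule real_sqrt_le_mono)
        qed
        also have "\<dots> = real (t0 n) powr (1/2)" using t1 by (simp add: powr_half_sqrt)
        also have "\<dots> \<le> real (t0 n) powr (dd + 1/2)" using t1 dd by (intro powr_mono) auto
        finally show ?thesis .
      qed
      have "cE n \<ge> exp (- lam) * real (T n) powr (- b) / 2"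
        unfolding cE_def lam_def T_def
        by (rule S.lower_n) (use th big in \<open>simp_all add: t0_def dd_def Dc_def lam_def\<close>)
      then show ?case using elim(1) S.T_ge S.T_le unfolding T_def by simp
    qed
  qed
  have EU: "eventually (\<lambda>n. cE n \<le> sqrt (2 * real K0) * (real (t0 n) / real (T n)) powr c) sequentially"
    if c: "0 \<le> c" "c < b" for c
  proof -
    have e1: "eventually (\<lambda>n. real (t0 n) \<ge> thrA c lam) sequentially"
      unfolding t0_def by (rule ev_t0_large)
    show ?thesis using EB e1
    proof eventually_elim
      case (elim n)
      interpret S: setup_n b n K0 by (rule SB[OF elim(1)])
      show ?case unfolding cE_def lam_def t0_def T_def
        by (rule S.upper_n[OF c]) (use elim(2) in \<open>simp add: t0_def lam_def\<close>)
    qed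
  qed
  define g where "g n = ln (cE n) / ln (real n) + b" for n
  have glim: "g \<longlonglongrightarrow> 0"
  proof (rule tendstoI)
    fix e :: real assume e: "e > 0"
    define Cl where "Cl = lam + b * ln 2 + ln 2"
    have l1: "((\<lambda>n::nat. 1 / ln (real n)) \<longlongrightarrow> 0) sequentially" by (rule seq_of_real_lim[OF lim_aux1])
    have l2: "((\<lambda>n::nat. ln (ln (real n)) / ln (real n)) \<longlongrightarrow> 0) sequentially" by (rule seq_of_real_lim[OF lim_aux2])
    have lowE: "eventually (\<lambda>n. g n > - e) sequentially"
    proof -
      have "((\<lambda>n::nat. Cl * (1 / ln (real n))) \<longlongrightarrow> Cl * 0) sequentially" by (intro tendsto_mult l1 tendsto_const)
      then have "eventually (\<lambda>n. \<bar>Cl * (1 / ln (real n))\<bar> < e) sequentially"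
        using e by (simp add: tendsto_iff dist_real_def)
      with EL show ?thesis
      proof eventually_elim
        case (elim n)
        have n3: "real n \<ge> 3" using elim(1) unfolding B_def by simp
        have lnpos: "ln (real n) > 0" using n3 by simp
        have Tpos: "real (T n) > 0" using elim(1) n3 by simp
        have low: "cE n \<ge> exp (- lam) * real (T n) powr (- b) / 2" using elim(1) by simp
        have pos: "exp (- lam) * real (T n) powr (- b) / 2 > 0" using Tpos by simp
        have "ln (cE n) \<ge> ln (exp (- lam) * real (T n) powr (- b) / 2)" using low pos by simp
        also have "ln (exp (- lam) * real (T n) powr (- b) / 2) = - lam - b * ln (real (T n)) - ln 2"
          using Tpos by (simp add: ln_mult ln_div ln_powr)
        also have "\<dots> \<ge> - lam - b * (ln 2 + ln (real n)) - ln 2"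
        proof -
          have "ln (real (T n)) \<le> ln (2 * real n)" using Tpos elim(1) by simp
          also have "\<dots> = ln 2 + ln (real n)" using n3 by (simp add: ln_mult)
          finally show ?thesis using b by (simp add: mult_left_mono)
        qed
        finally have "ln (cE n) \<ge> - Cl - b * ln (real n)" unfolding Cl_def by (simp add: algebra_simps)
        then have "ln (cE n) / ln (real n) \<ge> (- Cl - b * ln (real n)) / ln (real n)"
          using lnpos by (simp add: divide_right_mono)
        also have "(- Cl - b * ln (real n)) / ln (real n) = - (Cl * (1 / ln (real n))) - b"
          using lnpos by (simp add: field_simps)
        finally have "g n \<ge> - (Cl * (1 / ln (real n)))" unfolding g_def by simp
        then show ?case using elim(2) by linarith
      qed
    qed
    define c where "c = b - min e b / 2"
    have c: "0 \<le> c" "c < b" "b - c \<le> e / 2" unfolding c_def using e b by auto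
    define Cu where "Cu = ln (sqrt (2 * real K0)) + c * ln 2"
    have upE: "eventually (\<lambda>n. g n < e) sequentially"
    proof -
      have "((\<lambda>n::nat. Cu * (1 / ln (real n)) + (10 * c) * (ln (ln (real n)) / ln (real n))) \<longlongrightarrow> Cu * 0 + (10 * c) * 0) sequentially"
        by (intro tendsto_add tendsto_mult l1 l2 tendsto_const)
      from tendstoD[OF this, of "e/2"] e
      have "eventually (\<lambda>n. dist (Cu * (1 / ln (real n)) + (10 * c) * (ln (ln (real n)) / ln (real n))) (Cu * 0 + (10 * c) * 0) < e / 2) sequentially"
        by simp
      then have "eventually (\<lambda>n. \<bar>Cu * (1 / ln (real n)) + (10 * c) * (ln (ln (real n)) / ln (real n))\<bar> < e / 2) sequentially"
        by (simp add: dist_real_def)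
      with EL EU[OF c(1) c(2)] show ?thesis
      proof eventually_elim
        case (elim n)
        have BB: "B n" using elim(1) by simp
        have n3: "real n \<ge> 3" using BB unfolding B_def by simp
        have lnpos: "ln (real n) > 0" using n3 by simp
        have Tge: "real (T n) \<ge> real n" using elim(1) by simp
        have Tpos: "real (T n) > 0" using Tge n3 by simp
        have t02: "real (t0 n) \<ge> 2" using BB unfolding B_def t0_def by simp
        have cpos: "cE n > 0"
        proof -
          have "exp (- lam) * real (T n) powr (- b) / 2 > 0" using Tpos by simp
          then show ?thesis using elim(1) by linarith
        qed
        have "ln (cE n) \<le> ln (sqrt (2 * real K0) * (real (t0 n) / real (T n)) powr c)"
          using elim(2) cpos by simp
        also have "\<dots> = ln (sqrt (2 * real K0)) + c * (ln (real (t0 n)) - ln (real (T n)))"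
          using Tpos t02 K04 by (simp add: ln_mult ln_powr ln_div)
        also have "\<dots> \<le> ln (sqrt (2 * real K0)) + c * (ln 2 + 10 * ln (ln (real n)) - ln (real n))"
        proof -
          have "real (t0 n) \<le> 2 * real (Apar n)" unfolding t0_def by simp
          also have "\<dots> \<le> 2 * (ln (real n))^10" using Apar_le[of n] by simp
          finally have "ln (real (t0 n)) \<le> ln (2 * (ln (real n))^10)" using t02 by (intro ln_mono) auto
          also have "\<dots> = ln 2 + 10 * ln (ln (real n))" using lnpos by (simp add: ln_mult ln_realpow)
          finally have a: "ln (real (t0 n)) \<le> ln 2 + 10 * ln (ln (real n))" .
          have "ln (real (T n)) \<ge> ln (real n)" using Tge n3 by simp
          then show ?thesis using a c(1) by (intro add_left_mono mult_left_mono) auto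
        qed
        finally have "ln (cE n) \<le> Cu + 10 * c * ln (ln (real n)) - c * ln (real n)"
          unfolding Cu_def by (simp add: algebra_simps)
        then have "ln (cE n) / ln (real n) \<le> (Cu + 10 * c * ln (ln (real n)) - c * ln (real n)) / ln (real n)"
          using lnpos by (simp add: divide_right_mono)
        also have "\<dots> = Cu * (1 / ln (real n)) + (10 * c) * (ln (ln (real n)) / ln (real n)) - c"
          using lnpos by (simp add: field_simps)
        finally have "g n \<le> Cu * (1 / ln (real n)) + (10 * c) * (ln (ln (real n)) / ln (real n)) + (b - c)"
          unfolding g_def by simp
        then show ?case using elim(3) c(3) by linarith
      qed
    qed
    show "eventually (\<lambda>n. dist (g n) 0 < e) sequentially"
      using lowE upE by eventually_elim (simp add: dist_real_def abs_less_iff)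
  qed
  have geq: "eventually (\<lambda>n. condE (\<alpha> * (\<alpha> - 1) / 2) n = real n powr (- (\<alpha> - 1) / 2 + g n)) sequentially"
    using EL
  proof eventually_elim
    case (elim n)
    have n3: "real n \<ge> 3" using elim unfolding B_def by simp
    have lnpos: "ln (real n) > 0" using n3 by simp
    have Tpos: "real (T n) > 0" using elim n3 by simp
    have cpos: "cE n > 0"
    proof -
      have "exp (- lam) * real (T n) powr (- b) / 2 > 0" using Tpos by simp
      then show ?thesis using elim by linarith
    qed
    have "- (\<alpha> - 1) / 2 + g n = ln (cE n) / ln (real n)" unfolding g_def b_def by (simp add: field_simps)
    then have "real n powr (- (\<alpha> - 1) / 2 + g n) = exp (ln (real n) * (ln (cE n) / ln (real n)))"
      using n3 by (simp add: powr_def)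
    also have "\<dots> = cE n" using lnpos cpos by simp
    finally show ?case unfolding cE_def lamE lam_def by simp
  qed
  show ?thesis using glim geq by blast
qed

end
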